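(* There is a numerical constant $C>0$ such that the following holds. Let $\delta\in[0,1]$, $h\in(0,1/2]$, $(u,w)\in\mathcal A_\delta$, $E_h=E_h(u,w)$, and let $\tau$ be defined as below. Then \[ \min\{\tau^{1/2}h^{3/2},\tau^2\}\le C\,E_h . \]
   Context: Let $B_1=\{x\in\mathbb R^2:|x|<1\}$. For scalar functions $u,w$ on $(0,1)$ define $U(x)=\frac12(u(|x|)-|x|)\frac{x}{|x|}$ and $W(x)=w(|x|)$. For $\delta\in[0,1]$ let $\mathcal A_\delta$ be the set of pairs $(u,w)$ with $(U,W)\in W^{1,2}(B_1;\mathbb R^2)\times W^{2,2}(B_1)$, $w(0)=0$, $w(1)=1-\delta$. For $h>0$, \[ E_h(u,w)=\int_0^1\frac{u^2}{r}+r(u'+w'^2-1)^2+h^2\Big(rw''^2+\frac{w'^2}{r}\Big)dr . \] For $(u,w)\in\mathcal A_\delta$, $w'$ has a unique continuous representative on $(0,1)$ which extends continuously to $(0,1]$; $w'$ denotes this representative. Let $\mathcal W=\mathcal W^+\cup\mathcal W^-$ with $\mathcal W^+=(\frac12,\frac32)$, $\mathcal W^-=(-\frac32,-\frac12)$. Define $\tau=\max\{t\in(0,1]: w'(t)\notin\mathcal W\}$, and $\tau=0$ if $w'(t)\in\mathcal W$ for all $t\in(0,1]$. *)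

theory Defs
  imports "HOL-Analysis.Analysis"
begin

primrec Ck :: "nat \<Rightarrow> 'a::euclidean_space set \<Rightarrow> ('a \<Rightarrow> real) \<Rightarrow> bool" where
  "Ck 0 S f = continuous_on S f"
| "Ck (Suc k) S f =
     ((\<forall>x\<in>S. f differentiable (at x)) \<and>
      (\<forall>i\<in>Basis. Ck k S (\<lambda>x. frechet_derivative f (at x) i)))"

definition test_function :: "'a::euclidean_space set \<Rightarrow> ('a \<Rightarrow> real) \<Rightarrow> bool" where
  "test_function \<Omega> \<phi> \<longleftrightarrow>
     (\<forall>k. Ck k \<Omega> \<phi>) \<and> compact (closure {x. \<phi> x \<noteq> 0}) \<and> closure {x. \<phi> x \<noteq> 0} \<subseteq> \<Omega>"

definition locally_integrable :: "'a::euclidean_space set \<Rightarrow> ('a \<Rightarrow> real) \<Rightarrow> bool" where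
  "locally_integrable \<Omega> f \<longleftrightarrow>
     (\<forall>K. compact K \<and> K \<subseteq> \<Omega> \<longrightarrow> integrable (lebesgue_on K) f)"

definition weak_partial :: "'a::euclidean_space set \<Rightarrow> ('a \<Rightarrow> real) \<Rightarrow> 'a \<Rightarrow> ('a \<Rightarrow> real) \<Rightarrow> bool" where
  "weak_partial \<Omega> f i g \<longleftrightarrow>
     locally_integrable \<Omega> f \<and> locally_integrable \<Omega> g \<and>
     (\<forall>\<phi>. test_function \<Omega> \<phi> \<longrightarrow>
        (\<integral>x. f x * frechet_derivative \<phi> (at x) i \<partial>lebesgue_on \<Omega>)
          = - (\<integral>x. g x * \<phi> x \<partial>lebesgue_on \<Omega>))"

definition L2 :: "'a::euclidean_space set \<Rightarrow> ('a \<Rightarrow> real) \<Rightarrow> bool" where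
  "L2 \<Omega> f \<longleftrightarrow> f \<in> borel_measurable (lebesgue_on \<Omega>) \<and> integrable (lebesgue_on \<Omega>) (\<lambda>x. (f x)\<^sup>2)"

definition W12 :: "'a::euclidean_space set \<Rightarrow> ('a \<Rightarrow> real) \<Rightarrow> bool" where
  "W12 \<Omega> f \<longleftrightarrow> L2 \<Omega> f \<and> (\<forall>i\<in>Basis. \<exists>g. weak_partial \<Omega> f i g \<and> L2 \<Omega> g)"

definition W22 :: "'a::euclidean_space set \<Rightarrow> ('a \<Rightarrow> real) \<Rightarrow> bool" where
  "W22 \<Omega> f \<longleftrightarrow> L2 \<Omega> f \<and>
     (\<forall>i\<in>Basis. \<exists>g. weak_partial \<Omega> f i g \<and> L2 \<Omega> g \<and>
        (\<forall>j\<in>Basis. \<exists>g'. weak_partial \<Omega> g j g' \<and> L2 \<Omega> g'))"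

definition W12_vec :: "'a::euclidean_space set \<Rightarrow> ('a \<Rightarrow> 'b::euclidean_space) \<Rightarrow> bool" where
  "W12_vec \<Omega> U \<longleftrightarrow> (\<forall>b\<in>Basis. W12 \<Omega> (\<lambda>x. U x \<bullet> b))"

abbreviation B1 :: "(real^2) set" where "B1 \<equiv> ball 0 1"

definition Ufield :: "(real \<Rightarrow> real) \<Rightarrow> real^2 \<Rightarrow> real^2" where
  "Ufield u x = ((u (norm x) - norm x) / 2) *\<^sub>R (x /\<^sub>R norm x)"

definition Wfun :: "(real \<Rightarrow> real) \<Rightarrow> real^2 \<Rightarrow> real" where
  "Wfun w x = w (norm x)"

(* admissible class A_\<delta>.  w is any representative; the boundary values refer to
   its continuous representative on [0,1] *)
definition admissible :: "real \<Rightarrow> (real \<Rightarrow> real) \<Rightarrow> (real \<Rightarrow> real) \<Rightarrow> bool" where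
  "admissible \<delta> u w \<longleftrightarrow>
     W12_vec B1 (Ufield u) \<and> W22 B1 (Wfun w) \<and>
     (\<exists>w0. continuous_on {0..1} w0 \<and> (AE r in lebesgue_on {0<..<1}. w0 r = w r) \<and>
           w0 0 = 0 \<and> w0 1 = 1 - \<delta>)"

(* the energy E_h(u,w); du, dw, ddw are u', w', w'' *)
definition energy :: "real \<Rightarrow> (real \<Rightarrow> real) \<Rightarrow> (real \<Rightarrow> real) \<Rightarrow> (real \<Rightarrow> real) \<Rightarrow> (real \<Rightarrow> real) \<Rightarrow> ennreal" where
  "energy h u du dw ddw =
     (\<integral>\<^sup>+ r. ennreal ((u r)\<^sup>2 / r + r * (du r + (dw r)\<^sup>2 - 1)\<^sup>2
                       + h\<^sup>2 * (r * (ddw r)\<^sup>2 + (dw r)\<^sup>2 / r)) \<partial>lebesgue_on {0<..<1})"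

definition Wset :: "real set" where
  "Wset = {1/2<..<3/2} \<union> {-3/2<..<-1/2}"

definition tau :: "(real \<Rightarrow> real) \<Rightarrow> real" where
  "tau dw = (if \<exists>t\<in>{0<..1}. dw t \<notin> Wset
             then (GREATEST t. t \<in> {0<..1} \<and> dw t \<notin> Wset) else 0)"

end

theory Submission
  imports Defs "HOL-Computational_Algebra.Polynomial"
begin


abbreviation D :: "(real \<Rightarrow> real) \<Rightarrow> real \<Rightarrow> real" where
  "D f \<equiv> (\<lambda>x. frechet_derivative f (at x) 1)"

lemma Ck_Suc_UNIV:
  "Ck (Suc k) UNIV f \<longleftrightarrow> (\<exists>f'. (\<forall>x. (f has_real_derivative f' x) (at x)) \<and> Ck k UNIV f')"
proof
  assume A: "Ck (Suc k) UNIV f"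
  hence d: "\<forall>x. f differentiable (at x)" and c: "Ck k UNIV (D f)" by (auto simp: Basis_real_def)
  have "(f has_real_derivative D f x) (at x)" for x
  proof -
    have "(f has_derivative frechet_derivative f (at x)) (at x)"
      using d frechet_derivative_works by blast
    moreover have "bounded_linear (frechet_derivative f (at x))"
      using calculation has_derivative_bounded_linear by blast
    then obtain c where "frechet_derivative f (at x) = (\<lambda>h. h * c)"
      using real_bounded_linear by blast
    moreover have "(\<lambda>h. h * c) = (*) c" by (auto simp: mult.commute)
    ultimately show ?thesis
      by (simp add: has_field_derivative_def)
  qed
  then show "\<exists>f'. (\<forall>x. (f has_real_derivative f' x) (at x)) \<and> Ck k UNIV f'" using c by (intro exI[where x="D f"]) auto
next
  assume "\<exists>f'. (\<forall>x. (f has_real_derivative f' x) (at x)) \<and> Ck k UNIV f'"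
  then obtain f' where d: "\<And>x. (f has_real_derivative f' x) (at x)" and c: "Ck k UNIV f'" by blast
  have "D f = f'"
  proof
    fix x
    have "(\<lambda>h. f' x * h) = frechet_derivative f (at x)"
      using d[of x] by (simp add: has_field_derivative_def frechet_derivative_at)
    then show "D f x = f' x" by (metis mult.right_neutral)
  qed
  moreover have "\<forall>x. f differentiable (at x)"
    using d by (auto simp: differentiable_def has_field_derivative_def)
  ultimately show "Ck (Suc k) UNIV f" using c by (simp add: Basis_real_def)
qed

declare Ck.simps(2)[simp del]

lemma CkI: "(\<And>x. (f has_real_derivative f' x) (at x)) \<Longrightarrow> Ck k UNIV f' \<Longrightarrow> Ck (Suc k) UNIV f"
  using Ck_Suc_UNIV by blast

lemma CkE: assumes "Ck (Suc k) UNIV f"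
  obtains f' where "\<And>x. (f has_real_derivative f' x) (at x)" "Ck k UNIV f'"
  using assms Ck_Suc_UNIV by blast

lemma deriv_cont: "(\<And>x. (f has_real_derivative f' x) (at x)) \<Longrightarrow> continuous_on UNIV f"
  by (meson DERIV_isCont continuous_at_imp_continuous_on)

lemma Ck_mono: fixes f :: "real \<Rightarrow> real" shows "Ck (Suc k) UNIV f \<Longrightarrow> Ck k UNIV f"
proof (induction k arbitrary: f)
  case 0
  then obtain f' where "\<And>x. (f has_real_derivative f' x) (at x)" using CkE by blast
  then show ?case using deriv_cont by auto
next
  case (Suc k)
  then obtain f' where "\<And>x. (f has_real_derivative f' x) (at x)" "Ck (Suc k) UNIV f'" using CkE by blast
  then show ?case using Suc.IH by (intro CkI) auto
qed

lemma Ck_const: fixes c :: real shows "Ck k UNIV (\<lambda>x::real. c)"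
proof (induction k arbitrary: c)
  case 0 then show ?case by simp
next
  case (Suc k) show ?case
    by (rule CkI[of _ "\<lambda>x. 0"]) (auto intro: Suc.IH)
qed

lemma Ck_id: "Ck k UNIV (\<lambda>x::real. x)"
proof (cases k)
  case 0 then show ?thesis by (simp add: continuous_on_id)
next
  case (Suc k) then show ?thesis
    by (auto intro!: CkI[where f'="\<lambda>x. 1"] derivative_eq_intros Ck_const)
qed

lemma Ck_add: fixes f g :: "real \<Rightarrow> real" shows "Ck k UNIV f \<Longrightarrow> Ck k UNIV g \<Longrightarrow> Ck k UNIV (\<lambda>x. f x + g x)"
proof (induction k arbitrary: f g)
  case 0 then show ?case by (simp add: continuous_on_add)
next
  case (Suc k)
  obtain f' where "\<And>x. (f has_real_derivative f' x) (at x)" "Ck k UNIV f'" using Suc.prems(1) CkE by blast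
  moreover obtain g' where "\<And>x. (g has_real_derivative g' x) (at x)" "Ck k UNIV g'" using Suc.prems(2) CkE by blast
  ultimately show ?case
    by (intro CkI[where f'="\<lambda>x. f' x + g' x"]) (auto intro: derivative_eq_intros Suc.IH)
qed

lemma Ck_mult: fixes f g :: "real \<Rightarrow> real" shows "Ck k UNIV f \<Longrightarrow> Ck k UNIV g \<Longrightarrow> Ck k UNIV (\<lambda>x. f x * g x)"
proof (induction k arbitrary: f g)
  case 0 then show ?case by (simp add: continuous_on_mult)
next
  case (Suc k)
  obtain f' where "\<And>x. (f has_real_derivative f' x) (at x)" "Ck k UNIV f'" using Suc.prems(1) CkE by blast
  moreover obtain g' where "\<And>x. (g has_real_derivative g' x) (at x)" "Ck k UNIV g'" using Suc.prems(2) CkE by blast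
  moreover have "Ck k UNIV f" "Ck k UNIV g" using Suc.prems Ck_mono by auto
  ultimately show ?case
    by (intro CkI[where f'="\<lambda>x. f x * g' x + f' x * g x"]) (auto intro: DERIV_mult' Suc.IH Ck_add)
qed

lemma Ck_cmult: fixes f :: "real \<Rightarrow> real" shows "Ck k UNIV f \<Longrightarrow> Ck k UNIV (\<lambda>x. c * f x)"
  using Ck_mult[OF Ck_const] by blast

lemma Ck_diff: fixes f g :: "real \<Rightarrow> real" shows "Ck k UNIV f \<Longrightarrow> Ck k UNIV g \<Longrightarrow> Ck k UNIV (\<lambda>x. f x - g x)"
  using Ck_add[of k f "\<lambda>x. (-1) * g x"] Ck_cmult[of k g "-1"] by simp

lemma Ck_div: fixes f g :: "real \<Rightarrow> real" shows "Ck k UNIV f \<Longrightarrow> Ck k UNIV g \<Longrightarrow> (\<And>x. g x \<noteq> 0) \<Longrightarrow> Ck k UNIV (\<lambda>x. f x / g x)"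
proof (induction k arbitrary: f g)
  case 0 then show ?case by (simp add: continuous_on_divide)
next
  case (Suc k)
  obtain f' where "\<And>x. (f has_real_derivative f' x) (at x)" "Ck k UNIV f'" using Suc.prems(1) CkE by blast
  moreover obtain g' where "\<And>x. (g has_real_derivative g' x) (at x)" "Ck k UNIV g'" using Suc.prems(2) CkE by blast
  moreover have "Ck k UNIV f" "Ck k UNIV g" using Suc.prems Ck_mono by auto
  ultimately show ?case using Suc.prems(3)
    by (intro CkI[where f'="\<lambda>x. (f' x * g x - f x * g' x) / (g x * g x)"])
       (auto intro!: DERIV_divide Suc.IH Ck_add Ck_diff Ck_mult)
qed

lemma Ck_affine: fixes f :: "real \<Rightarrow> real" shows "Ck k UNIV f \<Longrightarrow> Ck k UNIV (\<lambda>x. f (c * x + d))"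
proof (induction k arbitrary: f)
  case 0 then show ?case
    by (auto intro!: continuous_on_compose2[of UNIV f] continuous_intros)
next
  case (Suc k)
  obtain f' where d: "\<And>x. (f has_real_derivative f' x) (at x)" "Ck k UNIV f'" using Suc.prems CkE by blast
  have "((\<lambda>x. f (c * x + d)) has_real_derivative f' (c * x + d) * c) (at x)" for x
    by (rule DERIV_chain2[OF d(1)]) (auto intro!: derivative_eq_intros)
  moreover have "Ck k UNIV (\<lambda>x. f' (c * x + d) * c)"
    using Ck_cmult[OF Suc.IH[OF d(2)], of c] by (simp add: mult.commute)
  ultimately show ?case
    by (intro CkI[where f'="\<lambda>x. f' (c * x + d) * c"])
qed

lemma Ck_subset: "Ck k UNIV f \<Longrightarrow> Ck k S f"
proof (induction k arbitrary: f)
  case 0 then show ?case using continuous_on_subset by auto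
next
  case (Suc k) then show ?case by (auto simp: Ck.simps(2))
qed



definition G :: "real poly \<Rightarrow> real \<Rightarrow> real" where
  "G p x = (if 0 < x then poly p (inverse x) * exp (- inverse x) else 0)"

definition qp :: "real poly \<Rightarrow> real poly" where
  "qp p = [:0,0,1:] * (p - pderiv p)"

lemma poly_exp_lim: "((\<lambda>y::real. poly p y * exp (-y)) \<longlongrightarrow> 0) at_top"
proof -
  have eq: "poly p y * exp (-y) = (\<Sum>i\<le>degree p. coeff p i * (y ^ i / exp y))" for y
    by (simp add: poly_altdef exp_minus divide_inverse sum_distrib_right mult.assoc)
  have "((\<lambda>y. \<Sum>i\<le>degree p. coeff p i * (y ^ i / exp y)) \<longlongrightarrow> (\<Sum>i\<le>degree p. coeff p i * 0)) at_top"
    by (intro tendsto_sum tendsto_mult tendsto_const tendsto_power_div_exp_0)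
  then show ?thesis by (simp add: eq)
qed

lemma G_lim: "(G p \<longlongrightarrow> 0) (at 0)"
proof (rule filterlim_split_at)
  show "(G p \<longlongrightarrow> 0) (at_left 0)"
    by (rule tendsto_eventually) (auto simp: G_def eventually_at_left_field intro: exI[of _ "-1"])
  have "((\<lambda>x. poly p (inverse x) * exp (- inverse x)) \<longlongrightarrow> 0) (at_right 0)"
    using filterlim_compose[OF poly_exp_lim filterlim_inverse_at_top_right] by (simp add: o_def)
  then show "(G p \<longlongrightarrow> 0) (at_right 0)"
    by (rule tendsto_cong[THEN iffD1, rotated])
       (auto simp: G_def eventually_at_right_field intro: exI[of _ 1])
qed

lemma G_0[simp]: "G p 0 = 0" by (simp add: G_def)

lemma G_deriv: "(G p has_real_derivative G (qp p) x) (at x)"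
proof -
  consider "x < 0" | "x = 0" | "x > 0" by linarith
  then show ?thesis
  proof cases
    case 1
    have "((\<lambda>x. 0) has_real_derivative G (qp p) x) (at x)" using 1 by (simp add: G_def)
    then show ?thesis
      by (rule has_field_derivative_transform_within_open[where S="{..<0}"]) (use 1 in \<open>auto simp: G_def\<close>)
  next
    case 2
    have eq: "G p h / h = G ([:0,1:] * p) h" for h
      by (cases "h > 0") (auto simp: G_def field_simps)
    have "((\<lambda>h. (G p (0 + h) - G p 0) / h) \<longlongrightarrow> 0) (at 0)"
      using G_lim[of "[:0,1:] * p"] by (simp add: eq)
    then show ?thesis using 2 by (simp add: DERIV_def)
  next
    case 3
    have d: "((\<lambda>x. poly p (inverse x) * exp (- inverse x)) has_real_derivative
       poly (pderiv p) (inverse x) * (- inverse (x^2)) * exp (- inverse x)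
       + poly p (inverse x) * (exp (- inverse x) * inverse (x^2))) (at x)"
      using 3
      by (auto intro!: derivative_eq_intros DERIV_chain2[OF poly_DERIV] simp: power2_eq_square)
    have "poly (pderiv p) (inverse x) * (- inverse (x^2)) * exp (- inverse x)
       + poly p (inverse x) * (exp (- inverse x) * inverse (x^2)) = G (qp p) x"
      using 3 by (simp add: G_def qp_def algebra_simps power2_eq_square)
    with d have "((\<lambda>x. poly p (inverse x) * exp (- inverse x)) has_real_derivative G (qp p) x) (at x)"
      by simp
    then show ?thesis
      by (rule has_field_derivative_transform_within_open[where S="{0<..}"]) (use 3 in \<open>auto simp: G_def\<close>)
  qed
qed

lemma G_Ck: "Ck k UNIV (G p)"
proof (induction k arbitrary: p)
  case 0 then show ?case using deriv_cont[OF G_deriv] by simp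
next
  case (Suc k) then show ?case using G_deriv by (intro CkI) auto
qed



abbreviation "psi \<equiv> G 1"
abbreviation "psi' \<equiv> G [:0,0,1:]"

lemma qp1: "qp 1 = [:0,0,1:]" by (simp add: qp_def)

lemma psi_deriv: "(psi has_real_derivative psi' x) (at x)"
  using G_deriv[of 1 x] by (simp add: qp1)

lemma psi_nonneg: "psi x \<ge> 0" by (simp add: G_def)
lemma psi_pos: "x > 0 \<Longrightarrow> psi x > 0" by (simp add: G_def)
lemma psi_zero: "x \<le> 0 \<Longrightarrow> psi x = 0" by (simp add: G_def)
lemma psi'_nonneg: "psi' x \<ge> 0" by (simp add: G_def)
lemma psi'_zero: "x \<le> 0 \<Longrightarrow> psi' x = 0" by (simp add: G_def)
lemma psi'_cont: "continuous_on UNIV psi'" using deriv_cont[OF G_deriv] .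
lemma psi_cont: "continuous_on UNIV psi" using deriv_cont[OF psi_deriv] .

definition den :: "real \<Rightarrow> real" where "den x = psi x + psi (1 - x)"

lemma den_pos: "den x > 0"
proof (cases "x > 0")
  case True then show ?thesis using psi_pos[of x] psi_nonneg[of "1-x"] by (simp add: den_def)
next
  case False then show ?thesis using psi_pos[of "1-x"] psi_nonneg[of x] by (simp add: den_def)
qed

lemma den_nz: "den x \<noteq> 0" using den_pos[of x] by simp
lemma den_nz': "psi x + psi (1 - x) \<noteq> 0" using den_nz[of x] by (simp add: den_def)

definition Sm :: "real \<Rightarrow> real" where "Sm x = psi x / den x"
definition Sm' :: "real \<Rightarrow> real" where
  "Sm' x = (psi' x * psi (1 - x) + psi x * psi' (1 - x)) / (den x * den x)"

lemma Sm_deriv: "(Sm has_real_derivative Sm' x) (at x)"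
proof -
  have d1: "((\<lambda>x. psi (1 - x)) has_real_derivative psi' (1 - x) * (-1)) (at x)"
    by (rule DERIV_chain2[OF psi_deriv]) (auto intro!: derivative_eq_intros)
  have "((\<lambda>x. psi x / (psi x + psi (1 - x))) has_real_derivative
     (psi' x * den x - psi x * (psi' x + psi' (1 - x) * (-1))) / (den x * den x)) (at x)"
    using den_pos[of x] unfolding den_def
    by (intro DERIV_divide DERIV_add psi_deriv d1) auto
  moreover have "(psi' x * den x - psi x * (psi' x + psi' (1 - x) * (-1))) / (den x * den x) = Sm' x"
    by (simp add: Sm'_def den_def algebra_simps)
  ultimately show ?thesis by (simp add: Sm_def[abs_def] den_def)
qed

lemma Sm_Ck: "Ck k UNIV Sm"
proof -
  have "Ck k UNIV (\<lambda>x. psi x / (psi x + psi ((-1) * x + 1)))"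
    using den_nz' by (intro Ck_div Ck_add Ck_affine G_Ck) auto
  then show ?thesis by (simp add: Sm_def[abs_def] den_def)
qed

lemma Sm_nonneg: "Sm x \<ge> 0" using den_pos[of x] psi_nonneg[of x] by (simp add: Sm_def)
lemma Sm_le1: "Sm x \<le> 1" using den_pos[of x] psi_nonneg[of "1-x"] by (simp add: Sm_def den_def)
lemma Sm_zero: "x \<le> 0 \<Longrightarrow> Sm x = 0" by (simp add: Sm_def psi_zero)
lemma Sm_one: "x \<ge> 1 \<Longrightarrow> Sm x = 1" using den_pos[of x] by (simp add: Sm_def den_def psi_zero)
lemma Sm'_nonneg: "Sm' x \<ge> 0"
  using psi_nonneg[of x] psi_nonneg[of "1-x"] psi'_nonneg[of x] psi'_nonneg[of "1-x"]
  by (simp add: Sm'_def)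
lemma Sm'_zero: "x \<le> 0 \<or> x \<ge> 1 \<Longrightarrow> Sm' x = 0"
  by (auto simp: Sm'_def psi_zero psi'_zero)
lemma psi1_cont: "continuous_on UNIV (\<lambda>x. psi (1 - x))"
  by (rule continuous_on_compose2[OF psi_cont]) (auto intro: continuous_intros)
lemma psi'1_cont: "continuous_on UNIV (\<lambda>x. psi' (1 - x))"
  by (rule continuous_on_compose2[OF psi'_cont]) (auto intro: continuous_intros)
lemma den_cont: "continuous_on UNIV den"
  unfolding den_def[abs_def] by (intro continuous_on_add psi_cont psi1_cont)

lemma Sm'_cont: "continuous_on UNIV Sm'"
  unfolding Sm'_def[abs_def] using den_nz
  by (intro continuous_on_divide continuous_on_add continuous_on_mult psi_cont psi'_cont psi1_cont psi'1_cont den_cont)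
     auto

lemma Sm'_bound: obtains M where "M \<ge> 1" "\<And>x. Sm' x \<le> M"
proof -
  have "compact (Sm' ` {0..1})"
    by (rule compact_continuous_image[OF continuous_on_subset[OF Sm'_cont]]) auto
  then obtain B where B: "\<And>y. y \<in> Sm' ` {0..1} \<Longrightarrow> norm y \<le> B"
    using compact_imp_bounded bounded_iff by metis
  have "Sm' x \<le> max B 1" for x
  proof (cases "x \<in> {0..1}")
    case True then show ?thesis using B[of "Sm' x"] by auto
  next
    case False then show ?thesis using Sm'_zero[of x] by auto
  qed
  then show ?thesis using that[of "max B 1"] by auto
qed



definition phi :: "real \<Rightarrow> real \<Rightarrow> real \<Rightarrow> real \<Rightarrow> real" where
  "phi s t e x = Sm ((x - s) / e) * Sm ((t - x) / e)"
definition P :: "real \<Rightarrow> real \<Rightarrow> real \<Rightarrow> real" where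
  "P s e x = Sm' ((x - s) / e) / e"
definition Q :: "real \<Rightarrow> real \<Rightarrow> real \<Rightarrow> real" where
  "Q t e x = Sm' ((t - x) / e) / e"

lemma Sm_aff_deriv: "((\<lambda>x. Sm (c * x + d)) has_real_derivative Sm' (c * x + d) * c) (at x)"
  by (rule DERIV_chain2[OF Sm_deriv]) (auto intro!: derivative_eq_intros)

lemma P_nonneg: "e > 0 \<Longrightarrow> P s e x \<ge> 0" by (simp add: P_def Sm'_nonneg)
lemma Q_nonneg: "e > 0 \<Longrightarrow> Q t e x \<ge> 0" by (simp add: Q_def Sm'_nonneg)
lemma P_zero: assumes "e > 0" "x \<notin> {s<..<s+e}" shows "P s e x = 0"
proof -
  have "x \<le> s \<or> x \<ge> s + e" using assms(2) by auto
  then have "(x - s) / e \<le> 0 \<or> (x - s) / e \<ge> 1" using assms(1)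
    by (auto simp: divide_le_0_iff le_divide_eq)
  then show ?thesis by (simp add: P_def Sm'_zero)
qed
lemma Q_zero: assumes "e > 0" "x \<notin> {t-e<..<t}" shows "Q t e x = 0"
proof -
  have "x \<ge> t \<or> x \<le> t - e" using assms(2) by auto
  then have "(t - x) / e \<le> 0 \<or> (t - x) / e \<ge> 1" using assms(1)
    by (auto simp: divide_le_0_iff le_divide_eq)
  then show ?thesis by (simp add: Q_def Sm'_zero)
qed
lemma P_le: "e > 0 \<Longrightarrow> (\<And>y. Sm' y \<le> M) \<Longrightarrow> P s e x \<le> M / e"
  by (simp add: P_def divide_right_mono)
lemma Q_le: "e > 0 \<Longrightarrow> (\<And>y. Sm' y \<le> M) \<Longrightarrow> Q t e x \<le> M / e"
  by (simp add: Q_def divide_right_mono)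
lemma P_cont: "e > 0 \<Longrightarrow> continuous_on A (P s e)"
  unfolding P_def[abs_def]
  by (intro continuous_on_divide continuous_on_compose2[OF Sm'_cont] continuous_intros) auto
lemma Q_cont: "e > 0 \<Longrightarrow> continuous_on A (Q t e)"
  unfolding Q_def[abs_def]
  by (intro continuous_on_divide continuous_on_compose2[OF Sm'_cont] continuous_intros) auto

lemma phi_nonneg: "phi s t e x \<ge> 0" by (simp add: phi_def Sm_nonneg)
lemma phi_le1: "phi s t e x \<le> 1"
  unfolding phi_def using Sm_nonneg Sm_le1 by (meson mult_le_one)
lemma phi_zero: assumes "e > 0" "x \<notin> {s<..<t}" shows "phi s t e x = 0"
proof -
  have "x \<le> s \<or> x \<ge> t" using assms(2) by auto
  then have "(x - s) / e \<le> 0 \<or> (t - x) / e \<le> 0" using assms(1)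
    by (auto simp: divide_le_0_iff)
  then show ?thesis by (auto simp: phi_def Sm_zero)
qed
lemma phi_one: assumes "e > 0" "x \<in> {s+e..t-e}" shows "phi s t e x = 1"
proof -
  have "(x - s) / e \<ge> 1" "(t - x) / e \<ge> 1" using assms by (auto simp: le_divide_eq)
  then show ?thesis by (simp add: phi_def Sm_one)
qed

lemma phi_deriv:
  assumes e: "e > 0" and st: "3 * e \<le> t - s"
  shows "(phi s t e has_real_derivative P s e x - Q t e x) (at x)"
proof -
  have d1: "((\<lambda>x. Sm ((1/e) * x + (-s/e))) has_real_derivative Sm' ((1/e) * x + (-s/e)) * (1/e)) (at x)"
    by (rule Sm_aff_deriv)
  have d2: "((\<lambda>x. Sm ((-1/e) * x + (t/e))) has_real_derivative Sm' ((-1/e) * x + (t/e)) * (-1/e)) (at x)"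
    by (rule Sm_aff_deriv)
  have a1: "(1/e) * x + (-s/e) = (x - s) / e" "(-1/e) * x + (t/e) = (t - x) / e" for x
    using e by (auto simp: field_simps)
  have "(phi s t e has_real_derivative
     Sm' ((x - s) / e) * (1/e) * Sm ((t - x) / e) + Sm ((x - s) / e) * (Sm' ((t - x) / e) * (-1/e))) (at x)"
    using DERIV_mult[OF d1 d2] unfolding a1 by (simp add: phi_def[abs_def] algebra_simps)
  moreover have "Sm' ((x - s) / e) * (1/e) * Sm ((t - x) / e) = P s e x"
  proof (cases "x \<in> {s<..<s+e}")
    case True
    then have "(t - x) / e \<ge> 1" using e st by (auto simp: le_divide_eq)
    then show ?thesis by (simp add: Sm_one P_def)
  next
    case False then show ?thesis using P_zero[OF e False] by (auto simp: P_def)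
  qed
  moreover have "Sm ((x - s) / e) * (Sm' ((t - x) / e) * (-1/e)) = - Q t e x"
  proof (cases "x \<in> {t-e<..<t}")
    case True
    then have "(x - s) / e \<ge> 1" using e st by (auto simp: le_divide_eq)
    then show ?thesis by (simp add: Sm_one Q_def)
  next
    case False then show ?thesis using Q_zero[OF e False] by (auto simp: Q_def)
  qed
  ultimately show ?thesis by simp
qed

lemma phi_frechet:
  assumes "e > 0" "3 * e \<le> t - s"
  shows "frechet_derivative (phi s t e) (at x) 1 = P s e x - Q t e x"
proof -
  have "(\<lambda>h. (P s e x - Q t e x) * h) = frechet_derivative (phi s t e) (at x)"
    using phi_deriv[OF assms, of x] unfolding has_field_derivative_def by (rule frechet_derivative_at)
  then show ?thesis by (metis mult.right_neutral)
qed

lemma phi_Ck: "Ck k UNIV (phi s t e)"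
proof -
  have "Ck k UNIV (\<lambda>x. Sm ((1/e) * x + (-s/e)) * Sm ((-1/e) * x + (t/e)))"
    by (intro Ck_mult Ck_affine Sm_Ck)
  moreover have "(\<lambda>x. Sm ((1/e) * x + (-s/e)) * Sm ((-1/e) * x + (t/e))) = phi s t e"
  proof
    fix x
    have "(1/e) * x + (-s/e) = (x - s) / e" "(-1/e) * x + (t/e) = (t - x) / e"
      by (simp_all add: diff_divide_distrib)
    then show "Sm ((1/e) * x + (-s/e)) * Sm ((-1/e) * x + (t/e)) = phi s t e x"
      by (simp add: phi_def)
  qed
  ultimately show ?thesis by simp
qed

lemma phi_test:
  assumes e: "e > 0" and "0 < s" "t < 1"
  shows "test_function {0<..<1} (phi s t e)"
proof -
  have sub: "{x. phi s t e x \<noteq> 0} \<subseteq> {s..t}"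
  proof
    fix x assume "x \<in> {x. phi s t e x \<noteq> 0}"
    then have "x \<in> {s<..<t}" using phi_zero[OF e, of x s t] by blast
    then show "x \<in> {s..t}" by simp
  qed
  have cl: "closure {x. phi s t e x \<noteq> 0} \<subseteq> {s..t}"
    by (rule closure_minimal[OF sub]) simp
  show ?thesis unfolding test_function_def
  proof (intro conjI allI)
    show "Ck k {0<..<1} (phi s t e)" for k by (rule Ck_subset[OF phi_Ck])
    show "compact (closure {x. phi s t e x \<noteq> 0})"
      unfolding compact_closure by (rule bounded_subset[OF bounded_closed_interval sub])
    have "{s..t} \<subseteq> {0<..<1::real}" using assms by auto
    then show "closure {x. phi s t e x \<noteq> 0} \<subseteq> {0<..<1}" using cl by blast
  qed
qed

lemma aff1: "(1/(e::real)) * x + (-s/e) = (x - s) / e" by (simp add: diff_divide_distrib)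
lemma aff2: "(-1/(e::real)) * x + (t/e) = (t - x) / e" by (simp add: diff_divide_distrib)

lemma integral_P: assumes e: "e > 0" shows "integral\<^sup>L (lebesgue_on {s..s+e}) (P s e) = 1"
proof -
  have d: "((\<lambda>x. Sm ((x - s) / e)) has_real_derivative P s e x) (at x)" for x
  proof -
    have "((\<lambda>x. Sm ((1/e) * x + (-s/e))) has_real_derivative Sm' ((1/e) * x + (-s/e)) * (1/e)) (at x)"
      by (rule Sm_aff_deriv)
    then show ?thesis unfolding aff1 by (simp add: P_def)
  qed
  have "(P s e has_integral (Sm ((s + e - s) / e) - Sm ((s - s) / e))) {s..s+e}"
    using e d by (intro fundamental_theorem_of_calculus)
      (auto simp: has_real_derivative_iff_has_vector_derivative[symmetric] intro: has_field_derivative_at_within)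
  moreover have "Sm ((s + e - s) / e) - Sm ((s - s) / e) = 1"
    using e by (simp add: Sm_one Sm_zero)
  moreover have "(P s e has_integral integral\<^sup>L (lebesgue_on {s..s+e}) (P s e)) {s..s+e}"
    by (intro has_integral_integral_lebesgue_on continuous_imp_integrable_real P_cont e) auto
  ultimately show ?thesis using has_integral_unique by metis
qed

lemma integral_Q: assumes e: "e > 0" shows "integral\<^sup>L (lebesgue_on {t-e..t}) (Q t e) = 1"
proof -
  have d: "((\<lambda>x. - Sm ((t - x) / e)) has_real_derivative Q t e x) (at x)" for x
  proof -
    have "((\<lambda>x. Sm ((-1/e) * x + (t/e))) has_real_derivative Sm' ((-1/e) * x + (t/e)) * (-1/e)) (at x)"
      by (rule Sm_aff_deriv)
    then have "((\<lambda>x. - Sm ((-1/e) * x + (t/e))) has_real_derivative - (Sm' ((-1/e) * x + (t/e)) * (-1/e))) (at x)"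
      by (rule DERIV_minus)
    then show ?thesis unfolding aff2 by (simp add: Q_def)
  qed
  have "(Q t e has_integral ((- Sm ((t - t) / e)) - (- Sm ((t - (t - e)) / e)))) {t-e..t}"
    using e d by (intro fundamental_theorem_of_calculus)
      (auto simp: has_real_derivative_iff_has_vector_derivative[symmetric] intro: has_field_derivative_at_within)
  moreover have "(- Sm ((t - t) / e)) - (- Sm ((t - (t - e)) / e)) = 1"
    using e by (simp add: Sm_one Sm_zero)
  moreover have "(Q t e has_integral integral\<^sup>L (lebesgue_on {t-e..t}) (Q t e)) {t-e..t}"
    by (intro has_integral_integral_lebesgue_on continuous_imp_integrable_real Q_cont e) auto
  ultimately show ?thesis using has_integral_unique by metis
qed



lemma int_restrict:
  fixes f :: "real \<Rightarrow> real"
  assumes "A \<subseteq> B" "A \<in> sets lebesgue" "B \<in> sets lebesgue" "\<And>x. x \<notin> A \<Longrightarrow> f x = 0"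
  shows "integral\<^sup>L (lebesgue_on B) f = integral\<^sup>L (lebesgue_on A) f"
proof -
  have "(\<lambda>x. indicator B x *\<^sub>R f x) = (\<lambda>x. indicator A x *\<^sub>R f x)"
    using assms(1,4) by (auto simp: indicator_def fun_eq_iff)
  then show ?thesis using assms(2,3) by (simp add: integral_restrict_space)
qed

lemma nn_restrict_mono:
  assumes "A \<subseteq> B" "A \<in> sets lebesgue" "B \<in> sets lebesgue"
  shows "(\<integral>\<^sup>+x. f x \<partial>lebesgue_on A) \<le> (\<integral>\<^sup>+x. f x \<partial>lebesgue_on B)"
proof -
  have "(\<integral>\<^sup>+x. f x \<partial>lebesgue_on A) = (\<integral>\<^sup>+x. f x * indicator A x \<partial>lebesgue)"
    using assms by (simp add: nn_integral_restrict_space)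
  also have "\<dots> \<le> (\<integral>\<^sup>+x. f x * indicator B x \<partial>lebesgue)"
    using assms(1) by (intro nn_integral_mono) (auto simp: indicator_def)
  also have "\<dots> = (\<integral>\<^sup>+x. f x \<partial>lebesgue_on B)"
    using assms by (simp add: nn_integral_restrict_space)
  finally show ?thesis .
qed

lemma wp_int:
  fixes f g :: "real \<Rightarrow> real"
  assumes "weak_partial {0<..<1} f 1 g" "0 < s" "t < 1"
  shows "integrable (lebesgue_on {s..t}) f" "integrable (lebesgue_on {s..t}) g"
proof -
  have "compact {s..t}" "{s..t} \<subseteq> {0<..<(1::real)}" using assms by auto
  then show "integrable (lebesgue_on {s..t}) f" "integrable (lebesgue_on {s..t}) g"
    using assms(1) unfolding weak_partial_def locally_integrable_def by blast+
qed

lemma weak_eq: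
  fixes f g :: "real \<Rightarrow> real"
  assumes "weak_partial {0<..<1} f 1 g" "e > 0" "3 * e \<le> t - s" "0 < s" "t < 1"
  shows "integral\<^sup>L (lebesgue_on {s..t}) (\<lambda>x. f x * (P s e x - Q t e x))
       = - integral\<^sup>L (lebesgue_on {s..t}) (\<lambda>x. g x * phi s t e x)"
proof -
  have "integral\<^sup>L (lebesgue_on {0<..<1}) (\<lambda>x. f x * frechet_derivative (phi s t e) (at x) 1)
       = - integral\<^sup>L (lebesgue_on {0<..<1}) (\<lambda>x. g x * phi s t e x)"
    using assms(1) phi_test[OF assms(2,4,5)] unfolding weak_partial_def by blast
  moreover have "(\<lambda>x. f x * frechet_derivative (phi s t e) (at x) 1) = (\<lambda>x. f x * (P s e x - Q t e x))"
    using phi_frechet[OF assms(2,3)] by simp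
  moreover have "integral\<^sup>L (lebesgue_on {0<..<1}) (\<lambda>x. f x * (P s e x - Q t e x))
      = integral\<^sup>L (lebesgue_on {s..t}) (\<lambda>x. f x * (P s e x - Q t e x))"
  proof (rule int_restrict)
    fix x assume "x \<notin> {s..t}"
    then have "x \<notin> {s<..<s+e}" "x \<notin> {t-e<..<t}" using assms by auto
    then show "f x * (P s e x - Q t e x) = 0" using P_zero Q_zero assms(2) by simp
  qed (use assms in auto)
  moreover have "integral\<^sup>L (lebesgue_on {0<..<1}) (\<lambda>x. g x * phi s t e x)
      = integral\<^sup>L (lebesgue_on {s..t}) (\<lambda>x. g x * phi s t e x)"
  proof (rule int_restrict)
    fix x assume "x \<notin> {s..t}"
    then have "x \<notin> {s<..<t}" by auto
    then show "g x * phi s t e x = 0" using phi_zero[OF assms(2), of x s t] by simp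
  qed (use assms in auto)
  ultimately show ?thesis by simp
qed

lemma phi_cont: "continuous_on A (phi s t e)"
proof -
  have "continuous_on UNIV (phi s t e)" using phi_Ck[of 0 s t e] by simp
  then show ?thesis using continuous_on_subset by blast
qed

lemma avg_bound:
  fixes f w :: "real \<Rightarrow> real"
  assumes "a \<le> b" "continuous_on {a..b} f" "continuous_on {a..b} w"
    "\<And>x. x \<in> {a..b} \<Longrightarrow> w x \<ge> 0" "integral\<^sup>L (lebesgue_on {a..b}) w = 1"
    "\<And>x. x \<in> {a..b} \<Longrightarrow> \<bar>f x - c\<bar> \<le> \<eta>"
  shows "\<bar>integral\<^sup>L (lebesgue_on {a..b}) (\<lambda>x. f x * w x) - c\<bar> \<le> \<eta>"
proof -
  let ?M = "lebesgue_on {a..b}"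
  have i1: "integrable ?M (\<lambda>x. f x * w x)"
    using assms by (intro continuous_imp_integrable_real continuous_on_mult) auto
  have i2: "integrable ?M (\<lambda>x. c * w x)"
    using assms by (intro continuous_imp_integrable_real continuous_on_mult continuous_on_const) auto
  have i3: "integrable ?M (\<lambda>x. (f x - c) * w x)"
    using assms by (intro continuous_imp_integrable_real continuous_on_mult continuous_on_diff continuous_on_const) auto
  have i4: "integrable ?M (\<lambda>x. \<eta> * w x)"
    using assms by (intro continuous_imp_integrable_real continuous_on_mult continuous_on_const) auto
  have "integral\<^sup>L ?M (\<lambda>x. f x * w x) - c = integral\<^sup>L ?M (\<lambda>x. f x * w x) - integral\<^sup>L ?M (\<lambda>x. c * w x)"
    using assms(5) by simp
  also have "\<dots> = integral\<^sup>L ?M (\<lambda>x. (f x - c) * w x)"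
    using i1 i2 by (simp add: left_diff_distrib)
  finally have eq: "integral\<^sup>L ?M (\<lambda>x. f x * w x) - c = integral\<^sup>L ?M (\<lambda>x. (f x - c) * w x)" .
  have "\<bar>integral\<^sup>L ?M (\<lambda>x. (f x - c) * w x)\<bar> \<le> integral\<^sup>L ?M (\<lambda>x. \<bar>(f x - c) * w x\<bar>)"
    using integral_abs_bound by blast
  also have "\<dots> \<le> integral\<^sup>L ?M (\<lambda>x. \<eta> * w x)"
  proof (rule integral_mono)
    show "integrable ?M (\<lambda>x. \<bar>(f x - c) * w x\<bar>)" using i3 by simp
    show "integrable ?M (\<lambda>x. \<eta> * w x)" by (rule i4)
    fix x assume "x \<in> space ?M"
    then have x: "x \<in> {a..b}" by simp
    show "\<bar>(f x - c) * w x\<bar> \<le> \<eta> * w x"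
      using assms(4,6)[OF x] by (simp add: abs_mult mult_right_mono)
  qed
  also have "\<dots> = \<eta>" using assms(5) by simp
  finally show ?thesis using eq by simp
qed

lemma dw_lip:
  fixes dw ddw :: "real \<Rightarrow> real"
  assumes wp: "weak_partial {0<..<1} dw 1 ddw" and c: "continuous_on {s..t} dw"
    and st: "0 < s" "s < t" "t < 1"
  shows "\<bar>dw t - dw s\<bar> \<le> integral\<^sup>L (lebesgue_on {s..t}) (\<lambda>x. \<bar>ddw x\<bar>)"
proof (rule field_le_epsilon)
  fix \<eta> :: real assume "\<eta> > 0"
  define \<eta>' where "\<eta>' = \<eta> / 2"
  have "\<eta>' > 0" using \<open>\<eta> > 0\<close> by (simp add: \<eta>'_def)
  let ?K = "{s..t}"
  have sK: "s \<in> ?K" and tK: "t \<in> ?K" using st by auto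
  obtain d1 where d1: "d1 > 0" "\<And>x. x \<in> ?K \<Longrightarrow> dist x s < d1 \<Longrightarrow> dist (dw x) (dw s) < \<eta>'"
    using c sK \<open>\<eta>' > 0\<close> unfolding continuous_on_iff by metis
  obtain d2 where d2: "d2 > 0" "\<And>x. x \<in> ?K \<Longrightarrow> dist x t < d2 \<Longrightarrow> dist (dw x) (dw t) < \<eta>'"
    using c tK \<open>\<eta>' > 0\<close> unfolding continuous_on_iff by metis
  define m where "m = min (min d1 d2) ((t - s) / 3)"
  define e where "e = m / 2"
  have m: "m > 0" "m \<le> (t - s) / 3" "m \<le> d1" "m \<le> d2"
    using d1(1) d2(1) st by (auto simp: min_def m_def)
  have e: "e > 0" "3 * e \<le> t - s" "e < d1" "e < d2"
    using m(1) m(2) m(3) m(4) by (auto simp: e_def)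
  let ?M = "lebesgue_on ?K"
  have eq: "integral\<^sup>L ?M (\<lambda>x. dw x * (P s e x - Q t e x)) = - integral\<^sup>L ?M (\<lambda>x. ddw x * phi s t e x)"
    by (rule weak_eq[OF wp e(1,2) st(1,3)])
  have iP: "integrable ?M (\<lambda>x. dw x * P s e x)"
    using c by (intro continuous_imp_integrable_real continuous_on_mult P_cont e(1))
  have iQ: "integrable ?M (\<lambda>x. dw x * Q t e x)"
    using c by (intro continuous_imp_integrable_real continuous_on_mult Q_cont e(1))
  have lin: "integral\<^sup>L ?M (\<lambda>x. dw x * (P s e x - Q t e x))
      = integral\<^sup>L ?M (\<lambda>x. dw x * P s e x) - integral\<^sup>L ?M (\<lambda>x. dw x * Q t e x)"
    using iP iQ by (simp add: right_diff_distrib)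
  have A1: "integral\<^sup>L ?M (\<lambda>x. dw x * P s e x) = integral\<^sup>L (lebesgue_on {s..s+e}) (\<lambda>x. dw x * P s e x)"
  proof (rule int_restrict)
    fix x assume "x \<notin> {s..s+e}"
    then have "x \<notin> {s<..<s+e}" by auto
    then show "dw x * P s e x = 0" using P_zero[OF e(1)] by simp
  qed (use e in auto)
  have A2: "\<bar>integral\<^sup>L (lebesgue_on {s..s+e}) (\<lambda>x. dw x * P s e x) - dw s\<bar> \<le> \<eta>'"
  proof (rule avg_bound)
    show "continuous_on {s..s+e} dw" by (rule continuous_on_subset[OF c]) (use e in auto)
    show "continuous_on {s..s+e} (P s e)" using P_cont e(1) .
    show "integral\<^sup>L (lebesgue_on {s..s+e}) (P s e) = 1" using integral_P e(1) .
    fix x assume x: "x \<in> {s..s+e}"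
    show "P s e x \<ge> 0" using P_nonneg e(1) .
    have "x \<in> ?K" "dist x s < d1" using x e by (auto simp: dist_real_def)
    then show "\<bar>dw x - dw s\<bar> \<le> \<eta>'" using d1(2) by (force simp: dist_real_def)
  qed (use e in auto)
  have B1: "integral\<^sup>L ?M (\<lambda>x. dw x * Q t e x) = integral\<^sup>L (lebesgue_on {t-e..t}) (\<lambda>x. dw x * Q t e x)"
  proof (rule int_restrict)
    fix x assume "x \<notin> {t-e..t}"
    then have "x \<notin> {t-e<..<t}" by auto
    then show "dw x * Q t e x = 0" using Q_zero[OF e(1)] by simp
  qed (use e in auto)
  have B2: "\<bar>integral\<^sup>L (lebesgue_on {t-e..t}) (\<lambda>x. dw x * Q t e x) - dw t\<bar> \<le> \<eta>'"
  proof (rule avg_bound)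
    show "continuous_on {t-e..t} dw" by (rule continuous_on_subset[OF c]) (use e in auto)
    show "continuous_on {t-e..t} (Q t e)" using Q_cont e(1) .
    show "integral\<^sup>L (lebesgue_on {t-e..t}) (Q t e) = 1" using integral_Q e(1) .
    fix x assume x: "x \<in> {t-e..t}"
    show "Q t e x \<ge> 0" using Q_nonneg e(1) .
    have "x \<in> ?K" "dist x t < d2" using x e by (auto simp: dist_real_def)
    then show "\<bar>dw x - dw t\<bar> \<le> \<eta>'" using d2(2) by (force simp: dist_real_def)
  qed (use e in auto)
  have iddw: "integrable ?M ddw" using wp_int[OF wp st(1,3)] by blast
  have iddwphi: "integrable ?M (\<lambda>x. ddw x * phi s t e x)"
  proof (rule Bochner_Integration.integrable_bound[of _ "\<lambda>x. \<bar>ddw x\<bar>"])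
    show "integrable ?M (\<lambda>x. \<bar>ddw x\<bar>)" using iddw by simp
    have "phi s t e \<in> borel_measurable ?M"
      by (intro continuous_imp_measurable_on_sets_lebesgue phi_cont) auto
    then show "(\<lambda>x. ddw x * phi s t e x) \<in> borel_measurable ?M"
      using iddw by (intro borel_measurable_times) auto
    show "AE x in ?M. norm (ddw x * phi s t e x) \<le> norm \<bar>ddw x\<bar>"
      using phi_nonneg phi_le1 by (intro AE_I2) (simp add: abs_mult mult_left_le)
  qed
  have C: "\<bar>integral\<^sup>L ?M (\<lambda>x. ddw x * phi s t e x)\<bar> \<le> integral\<^sup>L ?M (\<lambda>x. \<bar>ddw x\<bar>)"
  proof -
    have "\<bar>integral\<^sup>L ?M (\<lambda>x. ddw x * phi s t e x)\<bar> \<le> integral\<^sup>L ?M (\<lambda>x. \<bar>ddw x * phi s t e x\<bar>)"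
      using integral_abs_bound by blast
    also have "\<dots> \<le> integral\<^sup>L ?M (\<lambda>x. \<bar>ddw x\<bar>)"
    proof (rule integral_mono)
      show "integrable ?M (\<lambda>x. \<bar>ddw x * phi s t e x\<bar>)" using integrable_abs[OF iddwphi] .
      show "integrable ?M (\<lambda>x. \<bar>ddw x\<bar>)" using iddw by simp
      fix x show "\<bar>ddw x * phi s t e x\<bar> \<le> \<bar>ddw x\<bar>"
        using phi_nonneg[of s t e x] phi_le1[of s t e x] by (simp add: abs_mult mult_left_le)
    qed
    finally show ?thesis .
  qed
  show "\<bar>dw t - dw s\<bar> \<le> integral\<^sup>L ?M (\<lambda>x. \<bar>ddw x\<bar>) + \<eta>"
    using eq lin A1 A2 B1 B2 C unfolding \<eta>'_def by linarith
qed



lemma int_mult_cont: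
  fixes f h :: "real \<Rightarrow> real"
  assumes f: "integrable (lebesgue_on {a..b}) f" and h: "continuous_on {a..b} h"
  shows "integrable (lebesgue_on {a..b}) (\<lambda>x. f x * h x)"
proof -
  have "compact (h ` {a..b})" by (rule compact_continuous_image[OF h]) simp
  then obtain B where B: "\<And>y. y \<in> h ` {a..b} \<Longrightarrow> norm y \<le> B"
    using compact_imp_bounded bounded_iff by metis
  show ?thesis
  proof (rule Bochner_Integration.integrable_bound[of _ "\<lambda>x. B * \<bar>f x\<bar>"])
    show "integrable (lebesgue_on {a..b}) (\<lambda>x. B * \<bar>f x\<bar>)" using f by simp
    have "h \<in> borel_measurable (lebesgue_on {a..b})"
      by (intro continuous_imp_measurable_on_sets_lebesgue h) auto
    then show "(\<lambda>x. f x * h x) \<in> borel_measurable (lebesgue_on {a..b})"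
      using f by (intro borel_measurable_times) auto
    show "AE x in lebesgue_on {a..b}. norm (f x * h x) \<le> norm (B * \<bar>f x\<bar>)"
    proof (rule AE_I2)
      fix x assume "x \<in> space (lebesgue_on {a..b})"
      then have "\<bar>h x\<bar> \<le> B" using B by auto
      then have hb: "\<bar>f x\<bar> * \<bar>h x\<bar> \<le> \<bar>f x\<bar> * B" and B0: "B \<ge> 0"
        by (auto intro: mult_left_mono order_trans[OF abs_ge_zero])
      then show "norm (f x * h x) \<le> norm (B * \<bar>f x\<bar>)"
        by (simp add: abs_mult mult.commute)
    qed
  qed
qed

lemma measure_Icc_on:
  assumes "{c..d} \<subseteq> {a..b}" "c \<le> d"
  shows "integral\<^sup>L (lebesgue_on {a..b}) (indicator {c..d} :: real \<Rightarrow> real) = d - c"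
  using assms by (simp add: measure_restrict_space Int_absorb2)

lemma stretch:
  fixes u du dw :: "real \<Rightarrow> real"
  assumes wp: "weak_partial {0<..<1} u 1 du" and c: "continuous_on {a..b} dw"
    and ab: "0 < a" "a < b" "b < 1"
    and sig: "\<sigma> = 1 \<or> \<sigma> = -1" and sg: "\<And>x. x \<in> {a..b} \<Longrightarrow> \<sigma> * ((dw x)\<^sup>2 - 1) \<ge> 7/16"
    and M: "\<And>y. Sm' y \<le> M"
  shows "(7/48) * (b - a) \<le> integral\<^sup>L (lebesgue_on {a..b}) (\<lambda>x. \<bar>du x + (dw x)\<^sup>2 - 1\<bar>)
          + (3 * M / (b - a)) * integral\<^sup>L (lebesgue_on {a..b}) (\<lambda>x. \<bar>u x\<bar>)"
proof -
  define e where "e = (b - a) / 3"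
  have e: "e > 0" "3 * e \<le> b - a" using ab by (auto simp: e_def)
  let ?K = "{a..b}"
  let ?L = "lebesgue_on ?K"
  define F where "F x = (dw x)\<^sup>2 - 1" for x
  have cF: "continuous_on ?K F" unfolding F_def[abs_def]
    by (intro continuous_on_diff continuous_on_power c continuous_on_const)
  have cphi: "continuous_on ?K (phi a b e)" by (rule phi_cont)
  have cPQ: "continuous_on ?K (\<lambda>x. P a e x - Q b e x)"
    by (intro continuous_on_diff P_cont Q_cont e(1))
  have weq: "integral\<^sup>L ?L (\<lambda>x. u x * (P a e x - Q b e x)) = - integral\<^sup>L ?L (\<lambda>x. du x * phi a b e x)"
    by (rule weak_eq[OF wp e ab(1,3)])
  have iu: "integrable ?L u" and idu: "integrable ?L du" using wp_int[OF wp ab(1,3)] by auto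
  have iF: "integrable ?L F" by (rule continuous_imp_integrable_real[OF cF])
  have iduphi: "integrable ?L (\<lambda>x. du x * phi a b e x)" by (rule int_mult_cont[OF idu cphi])
  have iFphi: "integrable ?L (\<lambda>x. F x * phi a b e x)"
    by (rule continuous_imp_integrable_real) (intro continuous_on_mult cF cphi)
  have igphi: "integrable ?L (\<lambda>x. (du x + F x) * phi a b e x)"
    using iduphi iFphi by (simp add: distrib_right)
  have ig: "integrable ?L (\<lambda>x. du x + F x)" using idu iF by simp
  have iuPQ: "integrable ?L (\<lambda>x. u x * (P a e x - Q b e x))" by (rule int_mult_cont[OF iu cPQ])
  have iphi: "integrable ?L (phi a b e)" by (rule continuous_imp_integrable_real[OF cphi])
  have "integral\<^sup>L ?L (indicator {a+e..b-e} :: real \<Rightarrow> real) = (b - e) - (a + e)"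
    using e by (intro measure_Icc_on) auto
  moreover have "integral\<^sup>L ?L (indicator {a+e..b-e} :: real \<Rightarrow> real) \<le> integral\<^sup>L ?L (phi a b e)"
  proof (rule integral_mono)
    show "integrable ?L (indicator {a+e..b-e} :: real \<Rightarrow> real)"
      using e by (intro integrable_real_indicator) (auto simp: emeasure_restrict_space sets_restrict_space_iff)
    show "integrable ?L (phi a b e)" by (rule iphi)
    fix x show "(indicator {a+e..b-e} x :: real) \<le> phi a b e x"
      using phi_one[OF e(1), of x a b] phi_nonneg[of a b e x] by (auto simp: indicator_def)
  qed
  ultimately have "(b - e) - (a + e) \<le> integral\<^sup>L ?L (phi a b e)" by linarith
  moreover have "(b - e) - (a + e) = (b - a) / 3" by (simp add: e_def field_simps)
  ultimately have lb1: "(b - a) / 3 \<le> integral\<^sup>L ?L (phi a b e)" by linarith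
  have lb2: "(7/16) * integral\<^sup>L ?L (phi a b e) \<le> integral\<^sup>L ?L (\<lambda>x. \<sigma> * (F x * phi a b e x))"
  proof -
    have "integral\<^sup>L ?L (\<lambda>x. (7/16) * phi a b e x) \<le> integral\<^sup>L ?L (\<lambda>x. \<sigma> * (F x * phi a b e x))"
    proof (rule integral_mono)
      show "integrable ?L (\<lambda>x. (7/16) * phi a b e x)" using iphi by simp
      show "integrable ?L (\<lambda>x. \<sigma> * (F x * phi a b e x))" using iFphi by simp
      fix x assume "x \<in> space ?L"
      then have "x \<in> ?K" by simp
      then have "7/16 \<le> \<sigma> * F x" using sg by (simp add: F_def)
      then show "(7/16) * phi a b e x \<le> \<sigma> * (F x * phi a b e x)"
        using phi_nonneg[of a b e x] by (metis mult.assoc mult_right_mono)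
    qed
    then show ?thesis by simp
  qed
  have split: "integral\<^sup>L ?L (\<lambda>x. F x * phi a b e x)
     = integral\<^sup>L ?L (\<lambda>x. (du x + F x) * phi a b e x) + integral\<^sup>L ?L (\<lambda>x. u x * (P a e x - Q b e x))"
  proof -
    have "integral\<^sup>L ?L (\<lambda>x. (du x + F x) * phi a b e x)
        = integral\<^sup>L ?L (\<lambda>x. du x * phi a b e x) + integral\<^sup>L ?L (\<lambda>x. F x * phi a b e x)"
      using iduphi iFphi by (simp add: distrib_right)
    then show ?thesis using weq by simp
  qed
  have bg: "\<bar>integral\<^sup>L ?L (\<lambda>x. (du x + F x) * phi a b e x)\<bar> \<le> integral\<^sup>L ?L (\<lambda>x. \<bar>du x + F x\<bar>)"
  proof -
    have "\<bar>integral\<^sup>L ?L (\<lambda>x. (du x + F x) * phi a b e x)\<bar> \<le> integral\<^sup>L ?L (\<lambda>x. \<bar>(du x + F x) * phi a b e x\<bar>)"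
      using integral_abs_bound by blast
    also have "\<dots> \<le> integral\<^sup>L ?L (\<lambda>x. \<bar>du x + F x\<bar>)"
    proof (rule integral_mono)
      show "integrable ?L (\<lambda>x. \<bar>(du x + F x) * phi a b e x\<bar>)" using integrable_abs[OF igphi] .
      show "integrable ?L (\<lambda>x. \<bar>du x + F x\<bar>)" using integrable_abs[OF ig] .
      fix x show "\<bar>(du x + F x) * phi a b e x\<bar> \<le> \<bar>du x + F x\<bar>"
        using phi_nonneg[of a b e x] phi_le1[of a b e x] by (simp add: abs_mult mult_left_le)
    qed
    finally show ?thesis .
  qed
  have bu: "\<bar>integral\<^sup>L ?L (\<lambda>x. u x * (P a e x - Q b e x))\<bar> \<le> (M / e) * integral\<^sup>L ?L (\<lambda>x. \<bar>u x\<bar>)"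
  proof -
    have "\<bar>integral\<^sup>L ?L (\<lambda>x. u x * (P a e x - Q b e x))\<bar> \<le> integral\<^sup>L ?L (\<lambda>x. \<bar>u x * (P a e x - Q b e x)\<bar>)"
      using integral_abs_bound by blast
    also have "\<dots> \<le> integral\<^sup>L ?L (\<lambda>x. (M / e) * \<bar>u x\<bar>)"
    proof (rule integral_mono)
      show "integrable ?L (\<lambda>x. \<bar>u x * (P a e x - Q b e x)\<bar>)" using integrable_abs[OF iuPQ] .
      show "integrable ?L (\<lambda>x. (M / e) * \<bar>u x\<bar>)" using iu by simp
      fix x
      have "P a e x \<ge> 0" "Q b e x \<ge> 0" "P a e x \<le> M / e" "Q b e x \<le> M / e"
        using P_nonneg Q_nonneg P_le Q_le e(1) M by auto
      then have "\<bar>P a e x - Q b e x\<bar> \<le> M / e" by linarith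
      then have "\<bar>u x\<bar> * \<bar>P a e x - Q b e x\<bar> \<le> \<bar>u x\<bar> * (M / e)"
        by (rule mult_left_mono) simp
      then show "\<bar>u x * (P a e x - Q b e x)\<bar> \<le> (M / e) * \<bar>u x\<bar>"
        by (simp add: abs_mult mult.commute)
    qed
    also have "\<dots> = (M / e) * integral\<^sup>L ?L (\<lambda>x. \<bar>u x\<bar>)" by simp
    finally show ?thesis .
  qed
  define A where "A = integral\<^sup>L ?L (\<lambda>x. (du x + F x) * phi a b e x)"
  define B where "B = integral\<^sup>L ?L (\<lambda>x. u x * (P a e x - Q b e x))"
  define IF where "IF = integral\<^sup>L ?L (\<lambda>x. F x * phi a b e x)"
  define Iphi where "Iphi = integral\<^sup>L ?L (phi a b e)"
  have s1: "integral\<^sup>L ?L (\<lambda>x. \<sigma> * (F x * phi a b e x)) = \<sigma> * IF"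
    by (simp add: IF_def)
  have sz: "\<sigma> * z \<le> \<bar>z\<bar>" for z using sig by auto
  have "\<sigma> * IF = \<sigma> * A + \<sigma> * B" using split by (simp add: A_def B_def IF_def distrib_left)
  then have s2: "\<sigma> * IF \<le> \<bar>A\<bar> + \<bar>B\<bar>" using sz[of A] sz[of B] by linarith
  have s3: "(7/16) * ((b - a) / 3) \<le> (7/16) * Iphi" using lb1 by (simp add: Iphi_def)
  have s4: "(7/16) * Iphi \<le> \<sigma> * IF" using lb2 s1 unfolding Iphi_def by linarith
  have s5: "\<bar>A\<bar> \<le> integral\<^sup>L ?L (\<lambda>x. \<bar>du x + (dw x)\<^sup>2 - 1\<bar>)"
    using bg by (simp add: A_def F_def add_diff_eq)
  have s6: "\<bar>B\<bar> \<le> (3 * M / (b - a)) * integral\<^sup>L ?L (\<lambda>x. \<bar>u x\<bar>)"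
  proof -
    have "M / e = 3 * M / (b - a)" by (simp add: e_def)
    then show ?thesis using bu by (simp add: B_def)
  qed
  have "(7/48) * (b - a) = (7/16) * ((b - a) / 3)" by simp
  then show ?thesis using s2 s3 s4 s5 s6 by linarith
qed



lemma nn_bound_int:
  fixes F :: "'a \<Rightarrow> real"
  assumes m: "F \<in> borel_measurable M" and nn: "\<And>x. x \<in> space M \<Longrightarrow> F x \<ge> 0"
    and b: "(\<integral>\<^sup>+x. ennreal (F x) \<partial>M) \<le> ennreal c" and c: "c \<ge> 0"
  shows "integrable M F" "integral\<^sup>L M F \<le> c"
proof -
  have lt: "(\<integral>\<^sup>+x. ennreal (F x) \<partial>M) < \<infinity>" using b
    by (metis ennreal_less_top infinity_ennreal_def order_le_less_trans)
  show "integrable M F" using m nn lt by (intro integrableI_nonneg) (auto intro: AE_I2)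
  have "integral\<^sup>L M F = enn2real (\<integral>\<^sup>+x. ennreal (F x) \<partial>M)"
    using m nn by (intro integral_eq_nn_integral) (auto intro: AE_I2)
  also have "\<dots> \<le> enn2real (ennreal c)" using b by (intro enn2real_mono) auto
  also have "\<dots> = c" using c by simp
  finally show "integral\<^sup>L M F \<le> c" .
qed

lemma amgm_int:
  fixes f :: "real \<Rightarrow> real"
  assumes f: "integrable (lebesgue_on {a..b}) f" and f2: "integrable (lebesgue_on {a..b}) (\<lambda>x. (f x)\<^sup>2)"
    and ab: "a \<le> b" and l: "lam > 0"
  shows "integral\<^sup>L (lebesgue_on {a..b}) (\<lambda>x. \<bar>f x\<bar>)
     \<le> (lam / 2) * integral\<^sup>L (lebesgue_on {a..b}) (\<lambda>x. (f x)\<^sup>2) + (b - a) / (2 * lam)"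
proof -
  let ?L = "lebesgue_on {a..b}"
  have ic: "integrable ?L (\<lambda>x. 1 / (2 * lam))"
    by (rule continuous_imp_integrable_real) (rule continuous_on_const)
  have "integral\<^sup>L ?L (\<lambda>x. \<bar>f x\<bar>) \<le> integral\<^sup>L ?L (\<lambda>x. (lam / 2) * (f x)\<^sup>2 + 1 / (2 * lam))"
  proof (rule integral_mono)
    show "integrable ?L (\<lambda>x. \<bar>f x\<bar>)" using f by simp
    show "integrable ?L (\<lambda>x. (lam / 2) * (f x)\<^sup>2 + 1 / (2 * lam))" using f2 ic by simp
    fix x
    have "0 \<le> (lam * \<bar>f x\<bar> - 1)\<^sup>2" by simp
    then have "2 * lam * \<bar>f x\<bar> \<le> lam\<^sup>2 * (f x)\<^sup>2 + 1"
      by (simp add: power2_eq_square algebra_simps)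
    then show "\<bar>f x\<bar> \<le> (lam / 2) * (f x)\<^sup>2 + 1 / (2 * lam)"
      using l by (simp add: field_simps power2_eq_square)
  qed
  also have "\<dots> = (lam / 2) * integral\<^sup>L ?L (\<lambda>x. (f x)\<^sup>2) + integral\<^sup>L ?L (\<lambda>x. 1 / (2 * lam))"
    using f2 ic by simp
  also have "integral\<^sup>L ?L (\<lambda>x. 1 / (2 * lam)) = (b - a) / (2 * lam)"
    using ab by (simp add: measure_restrict_space)
  finally show ?thesis .
qed

lemma dw_limit:
  fixes dw :: "real \<Rightarrow> real"
  assumes c: "continuous_on {0<..1} dw" and x: "0 < x" "x < T" "T \<le> 1"
    and b: "\<And>t. x < t \<Longrightarrow> t < T \<Longrightarrow> \<bar>dw t - dw x\<bar> \<le> \<beta>"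
  shows "\<bar>dw T - dw x\<bar> \<le> \<beta>"
proof -
  have T: "T \<in> {0<..1}" using x by auto
  have "(dw \<longlongrightarrow> dw T) (at T within {0<..1})"
    using c T by (simp add: continuous_on_def)
  moreover have "at T within {x<..<T} \<le> at T within {0<..1}"
    using x by (intro at_le) auto
  ultimately have "(dw \<longlongrightarrow> dw T) (at T within {x<..<T})" by (rule tendsto_mono[rotated])
  then have lim: "((\<lambda>t. \<bar>dw t - dw x\<bar>) \<longlongrightarrow> \<bar>dw T - dw x\<bar>) (at T within {x<..<T})"
    by (intro tendsto_intros)
  have ev: "eventually (\<lambda>t. \<bar>dw t - dw x\<bar> \<le> \<beta>) (at T within {x<..<T})"
    using b by (auto simp: eventually_at_filter)
  have nt: "\<not> trivial_limit (at T within {x<..<T})"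
    using x by (simp add: trivial_limit_within islimpt_greaterThanLessThan2)
  show ?thesis using tendsto_upperbound[OF lim ev nt] .
qed



lemma part_bound:
  fixes f G :: "real \<Rightarrow> real"
  assumes En: "(\<integral>\<^sup>+x. ennreal (f x) \<partial>lebesgue_on {0<..<1}) \<le> ennreal e" and e: "e \<ge> 0"
    and pq: "0 < p" "p \<le> q" "q < 1"
    and G: "G \<in> borel_measurable (lebesgue_on {p..q})"
    and c: "c > 0" and le: "\<And>x. x \<in> {p..q} \<Longrightarrow> 0 \<le> G x \<and> c * G x \<le> f x"
  shows "integrable (lebesgue_on {p..q}) G" "integral\<^sup>L (lebesgue_on {p..q}) G \<le> e / c"
proof -
  let ?K = "lebesgue_on {p..q}"
  have "(\<integral>\<^sup>+x. ennreal (c * G x) \<partial>?K) \<le> (\<integral>\<^sup>+x. ennreal (f x) \<partial>?K)"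
    using le by (intro nn_integral_mono) (auto intro: ennreal_leI)
  also have "\<dots> \<le> (\<integral>\<^sup>+x. ennreal (f x) \<partial>lebesgue_on {0<..<1})"
    using pq by (intro nn_restrict_mono) auto
  also have "\<dots> \<le> ennreal e" by (rule En)
  finally have b: "(\<integral>\<^sup>+x. ennreal (c * G x) \<partial>?K) \<le> ennreal e" .
  have m: "(\<lambda>x. c * G x) \<in> borel_measurable ?K" using G by simp
  have nn: "\<And>x. x \<in> space ?K \<Longrightarrow> c * G x \<ge> 0" using le c by simp
  have i: "integrable ?K (\<lambda>x. c * G x)" and ib: "integral\<^sup>L ?K (\<lambda>x. c * G x) \<le> e"
    using nn_bound_int[OF m nn b e] by auto
  then show "integrable ?K G" using c by simp
  have "integral\<^sup>L ?K (\<lambda>x. c * G x) = c * integral\<^sup>L ?K G" by simp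
  then show "integral\<^sup>L ?K G \<le> e / c" using ib c by (simp add: field_simps)
qed

definition integrand :: "real \<Rightarrow> (real \<Rightarrow> real) \<Rightarrow> (real \<Rightarrow> real) \<Rightarrow> (real \<Rightarrow> real) \<Rightarrow> (real \<Rightarrow> real) \<Rightarrow> real \<Rightarrow> real" where
  "integrand h u du dw ddw r = (u r)\<^sup>2 / r + r * (du r + (dw r)\<^sup>2 - 1)\<^sup>2
                       + h\<^sup>2 * (r * (ddw r)\<^sup>2 + (dw r)\<^sup>2 / r)"

lemma energy_integrand: "energy h u du dw ddw = (\<integral>\<^sup>+x. ennreal (integrand h u du dw ddw x) \<partial>lebesgue_on {0<..<1})"
  by (simp add: energy_def integrand_def)

lemma integrand_parts:
  assumes "r > 0"
  shows "r * (du r + (dw r)\<^sup>2 - 1)\<^sup>2 \<le> integrand h u du dw ddw r"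
    "(u r)\<^sup>2 / r \<le> integrand h u du dw ddw r"
    "h\<^sup>2 * (r * (ddw r)\<^sup>2) \<le> integrand h u du dw ddw r"
proof -
  have a: "(u r)\<^sup>2 / r \<ge> 0" "r * (du r + (dw r)\<^sup>2 - 1)\<^sup>2 \<ge> 0" "h\<^sup>2 * (r * (ddw r)\<^sup>2) \<ge> 0"
     "h\<^sup>2 * ((dw r)\<^sup>2 / r) \<ge> 0"
    using assms by auto
  have "integrand h u du dw ddw r = (u r)\<^sup>2 / r + r * (du r + (dw r)\<^sup>2 - 1)\<^sup>2
      + h\<^sup>2 * (r * (ddw r)\<^sup>2) + h\<^sup>2 * ((dw r)\<^sup>2 / r)"
    by (simp add: integrand_def distrib_left)
  then show "r * (du r + (dw r)\<^sup>2 - 1)\<^sup>2 \<le> integrand h u du dw ddw r"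
    "(u r)\<^sup>2 / r \<le> integrand h u du dw ddw r"
    "h\<^sup>2 * (r * (ddw r)\<^sup>2) \<le> integrand h u du dw ddw r" using a by linarith+
qed

lemma energy_parts:
  fixes u du dw ddw :: "real \<Rightarrow> real"
  assumes En: "energy h u du dw ddw = ennreal e" and e: "e \<ge> 0"
    and wpu: "weak_partial {0<..<1} u 1 du" and wpd: "weak_partial {0<..<1} dw 1 ddw"
    and pq: "0 < p" "p \<le> q" "q < 1" and h: "h > 0" and c: "continuous_on {p..q} dw"
  shows "integrable (lebesgue_on {p..q}) (\<lambda>x. (ddw x)\<^sup>2)"
        "integral\<^sup>L (lebesgue_on {p..q}) (\<lambda>x. (ddw x)\<^sup>2) \<le> e / (h\<^sup>2 * p)"
        "integrable (lebesgue_on {p..q}) (\<lambda>x. (du x + (dw x)\<^sup>2 - 1)\<^sup>2)"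
        "integral\<^sup>L (lebesgue_on {p..q}) (\<lambda>x. (du x + (dw x)\<^sup>2 - 1)\<^sup>2) \<le> e / p"
        "integrable (lebesgue_on {p..q}) (\<lambda>x. (u x)\<^sup>2)"
        "integral\<^sup>L (lebesgue_on {p..q}) (\<lambda>x. (u x)\<^sup>2) \<le> e / (1 / q)"
proof -
  let ?f = "integrand h u du dw ddw"
  have E: "(\<integral>\<^sup>+x. ennreal (?f x) \<partial>lebesgue_on {0<..<1}) \<le> ennreal e"
    using En by (simp add: energy_integrand)
  let ?K = "lebesgue_on {p..q}"
  have iu: "integrable ?K u" "integrable ?K du" using wp_int[OF wpu, of p q] pq by auto
  have iddw: "integrable ?K ddw" using wp_int[OF wpd, of p q] pq by auto
  have mdw: "dw \<in> borel_measurable ?K" by (intro continuous_imp_measurable_on_sets_lebesgue c) auto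
  have m1: "(\<lambda>x. (ddw x)\<^sup>2) \<in> borel_measurable ?K" using iddw by measurable
  have m2: "(\<lambda>x. (du x + (dw x)\<^sup>2 - 1)\<^sup>2) \<in> borel_measurable ?K" using iu mdw by measurable
  have m3: "(\<lambda>x. (u x)\<^sup>2) \<in> borel_measurable ?K" using iu by measurable
  have hp: "h\<^sup>2 * p > 0" using h pq by simp
  have le1: "0 \<le> (ddw x)\<^sup>2 \<and> h\<^sup>2 * p * (ddw x)\<^sup>2 \<le> ?f x" if x: "x \<in> {p..q}" for x
  proof -
    have x0: "x > 0" using x pq by auto
    have "h\<^sup>2 * p * (ddw x)\<^sup>2 \<le> h\<^sup>2 * (x * (ddw x)\<^sup>2)"
      using x by (simp add: mult.assoc mult_left_mono mult_right_mono)
    then show ?thesis using integrand_parts(3)[OF x0, of h ddw u du dw] by simp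
  qed
  show "integrable ?K (\<lambda>x. (ddw x)\<^sup>2)" "integral\<^sup>L ?K (\<lambda>x. (ddw x)\<^sup>2) \<le> e / (h\<^sup>2 * p)"
    using part_bound[OF E e pq m1 hp le1] by auto
  have le2: "0 \<le> (du x + (dw x)\<^sup>2 - 1)\<^sup>2 \<and> p * (du x + (dw x)\<^sup>2 - 1)\<^sup>2 \<le> ?f x" if x: "x \<in> {p..q}" for x
  proof -
    have x0: "x > 0" using x pq by auto
    have "p * (du x + (dw x)\<^sup>2 - 1)\<^sup>2 \<le> x * (du x + (dw x)\<^sup>2 - 1)\<^sup>2"
      using x by (simp add: mult_right_mono)
    then show ?thesis using integrand_parts(1)[OF x0, of du dw h u ddw] by simp
  qed
  show "integrable ?K (\<lambda>x. (du x + (dw x)\<^sup>2 - 1)\<^sup>2)"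
     "integral\<^sup>L ?K (\<lambda>x. (du x + (dw x)\<^sup>2 - 1)\<^sup>2) \<le> e / p"
    using part_bound[OF E e pq m2 pq(1) le2] by auto
  have q0: "1 / q > 0" using pq by simp
  have le3: "0 \<le> (u x)\<^sup>2 \<and> (1 / q) * (u x)\<^sup>2 \<le> ?f x" if x: "x \<in> {p..q}" for x
  proof -
    have x0: "x > 0" using x pq by auto
    have "(1 / q) * (u x)\<^sup>2 \<le> (u x)\<^sup>2 / x"
      using x x0 by (simp add: divide_left_mono frac_le)
    then show ?thesis using integrand_parts(2)[OF x0, of u h du dw ddw] by simp
  qed
  show "integrable ?K (\<lambda>x. (u x)\<^sup>2)" "integral\<^sup>L ?K (\<lambda>x. (u x)\<^sup>2) \<le> e / (1 / q)"
    using part_bound[OF E e pq m3 q0 le3] by auto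
qed



lemma close_lemma:
  fixes u du dw ddw :: "real \<Rightarrow> real"
  assumes En: "energy h u du dw ddw = ennreal e" and e: "e \<ge> 0"
    and wpu: "weak_partial {0<..<1} u 1 du" and wpd: "weak_partial {0<..<1} dw 1 ddw"
    and c: "continuous_on {0<..1} dw"
    and T: "0 < T" "T \<le> 1" and h: "h > 0"
    and l: "ell > 0" "ell \<le> T/2" "32 * ell * e \<le> h\<^sup>2 * T"
    and x: "T - ell \<le> x" "x < T"
  shows "\<bar>dw T - dw x\<bar> \<le> 1/4"
proof -
  have x0: "x > 0" "x \<ge> T / 2" using x l by auto
  show ?thesis
  proof (rule dw_limit[OF c x0(1) x(2) T(2)])
    fix t assume t: "x < t" "t < T"
    have t1: "t < 1" using t T by simp
    have ct: "continuous_on {x..t} dw" by (rule continuous_on_subset[OF c]) (use x0 t1 in auto)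
    have "\<bar>dw t - dw x\<bar> \<le> integral\<^sup>L (lebesgue_on {x..t}) (\<lambda>y. \<bar>ddw y\<bar>)"
      by (rule dw_lip[OF wpd ct x0(1) t(1) t1])
    also have "\<dots> \<le> ((4 * ell) / 2) * integral\<^sup>L (lebesgue_on {x..t}) (\<lambda>y. (ddw y)\<^sup>2) + (t - x) / (2 * (4 * ell))"
    proof (rule amgm_int)
      show "integrable (lebesgue_on {x..t}) ddw" using wp_int[OF wpd x0(1) t1] by auto
      show "integrable (lebesgue_on {x..t}) (\<lambda>y. (ddw y)\<^sup>2)"
        using energy_parts(1)[OF En e wpu wpd x0(1) _ t1 h ct] t by auto
    qed (use t l in auto)
    also have "\<dots> \<le> ((4 * ell) / 2) * (e / (h\<^sup>2 * x)) + ell / (2 * (4 * ell))"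
    proof (rule add_mono)
      show "((4 * ell) / 2) * integral\<^sup>L (lebesgue_on {x..t}) (\<lambda>y. (ddw y)\<^sup>2) \<le> ((4 * ell) / 2) * (e / (h\<^sup>2 * x))"
        using energy_parts(2)[OF En e wpu wpd x0(1) _ t1 h ct] t l by (intro mult_left_mono) auto
      show "(t - x) / (2 * (4 * ell)) \<le> ell / (2 * (4 * ell))"
        using t x l by (intro divide_right_mono) auto
    qed
    also have "\<dots> \<le> 1/4"
    proof -
      have "ell / (2 * (4 * ell)) = 1/8" using l by simp
      moreover have "((4 * ell) / 2) * (e / (h\<^sup>2 * x)) \<le> 1/8"
      proof -
        have hx: "h\<^sup>2 * x > 0" using h x0 by simp
        have "16 * ell * e \<le> h\<^sup>2 * x"
        proof -
          have "h\<^sup>2 * T \<le> h\<^sup>2 * (2 * x)" using x0 by (intro mult_left_mono) auto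
          then show ?thesis using l(3) by linarith
        qed
        then show ?thesis using hx by (simp add: field_simps)
      qed
      ultimately show ?thesis by linarith
    qed
    finally show "\<bar>dw t - dw x\<bar> \<le> 1/4" .
  qed
qed

lemma sign_lemma:
  assumes nW: "y \<notin> Wset" and c: "\<bar>y - z\<bar> \<le> 1/4"
  shows "\<exists>\<sigma>::real. (\<sigma> = 1 \<or> \<sigma> = -1) \<and> \<sigma> * (z\<^sup>2 - 1) \<ge> 7/16"
proof -
  have "\<bar>y\<bar> \<le> 1/2 \<or> \<bar>y\<bar> \<ge> 3/2" using nW by (auto simp: Wset_def abs_if)
  then show ?thesis
  proof
    assume "\<bar>y\<bar> \<le> 1/2"
    then have "\<bar>z\<bar> \<le> 3/4" using c by linarith
    then have "\<bar>z\<bar>\<^sup>2 \<le> (3/4)\<^sup>2" by (intro power_mono) auto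
    then have "z\<^sup>2 \<le> 9/16" by (simp add: power2_eq_square)
    then show ?thesis by (intro exI[of _ "-1"]) auto
  next
    assume "\<bar>y\<bar> \<ge> 3/2"
    then have "\<bar>z\<bar> \<ge> 5/4" using c by linarith
    then have "(5/4)\<^sup>2 \<le> \<bar>z\<bar>\<^sup>2" by (intro power_mono) auto
    then have "z\<^sup>2 \<ge> 25/16" by (simp add: power2_eq_square)
    then show ?thesis by (intro exI[of _ "1"]) auto
  qed
qed

lemma core_analytic:
  fixes u du dw ddw :: "real \<Rightarrow> real"
  assumes En: "energy h u du dw ddw = ennreal e" and e: "e \<ge> 0"
    and wpu: "weak_partial {0<..<1} u 1 du" and wpd: "weak_partial {0<..<1} dw 1 ddw"
    and c: "continuous_on {0<..1} dw"
    and T: "0 < T" "T \<le> 1" and nW: "dw T \<notin> Wset" and h: "h > 0"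
    and M: "\<And>y. Sm' y \<le> M" "M \<ge> 1"
    and l: "ell > 0" "ell \<le> T/2" "32 * ell * e \<le> h\<^sup>2 * T"
  shows "(7/96) * (ell/2) \<le> (96/7) * (e / T) + (432 * M\<^sup>2 / 7) * T * e / (ell/2)\<^sup>2"
proof -
  define a where "a = T - ell"
  define b where "b = T - ell/2"
  define m where "m = ell/2"
  have ab: "0 < a" "a < b" "b < 1" "b - a = m" "a \<ge> T/2" "b \<le> T" "m > 0"
    using T l by (auto simp: a_def b_def m_def)
  have cab: "continuous_on {a..b} dw" by (rule continuous_on_subset[OF c]) (use ab in auto)
  have cl: "\<bar>dw T - dw x\<bar> \<le> 1/4" if "x \<in> {a..b}" for x
  proof -
    have "b < T" using l by (simp add: b_def)
    then show ?thesis using close_lemma[OF En e wpu wpd c T h l, of x] that by (auto simp: a_def)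
  qed
  have "\<exists>\<sigma>::real. (\<sigma> = 1 \<or> \<sigma> = -1) \<and> (\<forall>x\<in>{a..b}. \<sigma> * ((dw x)\<^sup>2 - 1) \<ge> 7/16)"
  proof -
    have "\<bar>dw T\<bar> \<le> 1/2 \<or> \<bar>dw T\<bar> \<ge> 3/2" using nW by (auto simp: Wset_def abs_if)
    then show ?thesis
    proof
      assume A: "\<bar>dw T\<bar> \<le> 1/2"
      show ?thesis
      proof (intro exI[of _ "-1"] conjI ballI)
        fix x assume "x \<in> {a..b}"
        then have "\<bar>dw T - dw x\<bar> \<le> 1/4" by (rule cl)
        then have "\<bar>dw x\<bar> \<le> 3/4" using A by linarith
        then have "\<bar>dw x\<bar>\<^sup>2 \<le> (3/4)\<^sup>2" by (intro power_mono) auto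
        then show "-1 * ((dw x)\<^sup>2 - 1) \<ge> 7/16" by (simp add: power2_eq_square)
      qed simp
    next
      assume A: "\<bar>dw T\<bar> \<ge> 3/2"
      show ?thesis
      proof (intro exI[of _ "1"] conjI ballI)
        fix x assume "x \<in> {a..b}"
        then have "\<bar>dw T - dw x\<bar> \<le> 1/4" by (rule cl)
        then have "\<bar>dw x\<bar> \<ge> 5/4" using A by linarith
        then have "(5/4)\<^sup>2 \<le> \<bar>dw x\<bar>\<^sup>2" by (intro power_mono) auto
        then show "1 * ((dw x)\<^sup>2 - 1) \<ge> 7/16" by (simp add: power2_eq_square)
      qed simp
    qed
  qed
  then obtain \<sigma> :: real where sig: "\<sigma> = 1 \<or> \<sigma> = -1" and sg: "\<And>x. x \<in> {a..b} \<Longrightarrow> \<sigma> * ((dw x)\<^sup>2 - 1) \<ge> 7/16"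
    by blast
  let ?K = "lebesgue_on {a..b}"
  define G1 where "G1 = integral\<^sup>L ?K (\<lambda>x. \<bar>du x + (dw x)\<^sup>2 - 1\<bar>)"
  define U1 where "U1 = integral\<^sup>L ?K (\<lambda>x. \<bar>u x\<bar>)"
  have st: "(7/48) * m \<le> G1 + (3 * M / m) * U1"
    using stretch[OF wpu cab ab(1,2,3) sig sg M(1)] ab(4) by (simp add: G1_def U1_def)
  have iu: "integrable ?K u" "integrable ?K du" using wp_int[OF wpu ab(1) ab(3)] by auto
  have ig: "integrable ?K (\<lambda>x. du x + (dw x)\<^sup>2 - 1)"
  proof -
    have "integrable ?K (\<lambda>x. (dw x)\<^sup>2 - 1)"
      by (intro continuous_imp_integrable_real continuous_on_diff continuous_on_power cab continuous_on_const)
    then show ?thesis using iu(2) by (simp add: add_diff_eq[symmetric])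
  qed
  have ep: "integrable ?K (\<lambda>x. (du x + (dw x)\<^sup>2 - 1)\<^sup>2)"
           "integral\<^sup>L ?K (\<lambda>x. (du x + (dw x)\<^sup>2 - 1)\<^sup>2) \<le> e / a"
           "integrable ?K (\<lambda>x. (u x)\<^sup>2)"
           "integral\<^sup>L ?K (\<lambda>x. (u x)\<^sup>2) \<le> e / (1 / b)"
    using energy_parts(3-6)[OF En e wpu wpd ab(1) _ ab(3) h cab] ab by auto
  have G1b: "G1 \<le> ((96/7) / 2) * (e / a) + m / (2 * (96/7))"
  proof -
    have "G1 \<le> ((96/7) / 2) * integral\<^sup>L ?K (\<lambda>x. (du x + (dw x)\<^sup>2 - 1)\<^sup>2) + (b - a) / (2 * (96/7))"
      unfolding G1_def using ab by (intro amgm_int ig ep(1)) auto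
    also have "\<dots> \<le> ((96/7) / 2) * (e / a) + m / (2 * (96/7))"
      using ep(2) ab(4) by simp
    finally show ?thesis .
  qed
  define lam where "lam = 288 * M / (7 * m)"
  have lam: "lam > 0" using M(2) ab by (simp add: lam_def)
  have U1b: "U1 \<le> (lam / 2) * (b * e) + m / (2 * lam)"
  proof -
    have "U1 \<le> (lam / 2) * integral\<^sup>L ?K (\<lambda>x. (u x)\<^sup>2) + (b - a) / (2 * lam)"
      unfolding U1_def using ab lam by (intro amgm_int iu(1) ep(3)) auto
    also have "\<dots> \<le> (lam / 2) * (b * e) + m / (2 * lam)"
      using ep(4) ab(4) lam by (intro add_mono mult_left_mono) (auto simp: mult.commute)
    finally show ?thesis .
  qed
  have t1: "((96/7) / 2) * (e / a) \<le> (96/7) * (e / T)"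
  proof -
    have "e / a \<le> e / (T/2)" using ab e T by (intro divide_left_mono) auto
    then show ?thesis by simp
  qed
  have t2: "(3 * M / m) * U1 \<le> (432 * M\<^sup>2 / 7) * T * e / m\<^sup>2 + 7 * m / 192"
  proof -
    have M0: "3 * M / m \<ge> 0" using M(2) ab by simp
    have "(3 * M / m) * U1 \<le> (3 * M / m) * ((lam / 2) * (b * e) + m / (2 * lam))"
      by (rule mult_left_mono[OF U1b M0])
    also have "\<dots> = (432 * M\<^sup>2 / 7) * b * e / m\<^sup>2 + 7 * m / 192"
      using M(2) ab by (simp add: lam_def field_simps power2_eq_square)
    also have "\<dots> \<le> (432 * M\<^sup>2 / 7) * T * e / m\<^sup>2 + 7 * m / 192"
      using ab e by (intro add_mono divide_right_mono mult_right_mono mult_left_mono) auto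
    finally show ?thesis .
  qed
  have "(7/48) * m \<le> (96/7) * (e / T) + m / (2 * (96/7)) + (432 * M\<^sup>2 / 7) * T * e / m\<^sup>2 + 7 * m / 192"
    using st G1b t1 t2 by linarith
  then show ?thesis unfolding m_def[symmetric] by simp
qed



lemma P0_eq: assumes "T \<ge> 0" "h \<ge> 0"
  shows "T powr (1/2) * h powr (3/2) = sqrt T * h * sqrt h"
proof -
  have "h powr (3/2) = h powr (1 + 1/2)" by simp
  also have "\<dots> = h powr 1 * h powr (1/2)" by (rule powr_add)
  also have "\<dots> = h * h powr (1/2)"
    using assms by (cases "h = 0") auto
  finally show ?thesis using assms by (simp add: powr_half_sqrt)
qed

lemma final_arith:
  fixes T h e M :: real
  assumes T: "0 < T" "T \<le> 1" and h: "h > 0" and e: "e \<ge> 0" and M: "M \<ge> 1"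
    and H: "\<And>ell. ell > 0 \<Longrightarrow> ell \<le> T/2 \<Longrightarrow> 32 * ell * e \<le> h\<^sup>2 * T \<Longrightarrow>
        (7/96) * (ell/2) \<le> (96/7) * (e / T) + (432 * M\<^sup>2 / 7) * T * e / (ell/2)\<^sup>2"
  shows "min (T powr (1/2) * h powr (3/2)) (T\<^sup>2) \<le> 110000 * M\<^sup>2 * e"
proof -
  have M2: "M\<^sup>2 \<ge> 1" using M by (simp add: one_le_power)
  have P0: "T powr (1/2) * h powr (3/2) = sqrt T * h * sqrt h" using T h by (intro P0_eq) auto
  show ?thesis
  proof (cases "16 * e \<le> h\<^sup>2")
    case True
    have "(7/96) * ((T/2)/2) \<le> (96/7) * (e / T) + (432 * M\<^sup>2 / 7) * T * e / ((T/2)/2)\<^sup>2"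
      using True T e by (intro H) auto
    then have "(7/96) * ((T/2)/2) * T \<le> ((96/7) * (e / T) + (432 * M\<^sup>2 / 7) * T * e / ((T/2)/2)\<^sup>2) * T"
      using T by (intro mult_right_mono) auto
    also have "\<dots> = (96/7) * e + (432 * 16 * M\<^sup>2 / 7) * e"
    proof -
      have q1: "(96/7) * (e / T) * T = (96/7) * e" using T by simp
      have q2: "(432 * M\<^sup>2 / 7) * T * e / ((T/2)/2)\<^sup>2 * T = (432 * 16 * M\<^sup>2 / 7) * e"
        using T by (simp add: power2_eq_square divide_simps)
      show ?thesis by (simp only: distrib_right q1 q2)
    qed
    finally have "(7/384) * T\<^sup>2 \<le> (96/7) * e + (432 * 16 * M\<^sup>2 / 7) * e"
      by (simp add: power2_eq_square)
    moreover have "(96/7) * e \<le> (96/7) * M\<^sup>2 * e" using M2 e by (simp add: mult_right_mono)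
    ultimately have "T\<^sup>2 \<le> 110000 * M\<^sup>2 * e" using e M2 by linarith
    then show ?thesis by linarith
  next
    case False
    then have e0: "e > 0" using h by (smt (verit) zero_less_power2)
    define ell where "ell = T * h\<^sup>2 / (32 * e)"
    have hh: "h\<^sup>2 / (32 * e) \<le> 1/2" using False e0 by (simp add: divide_le_eq)
    have l: "ell > 0" "ell \<le> T/2" "32 * ell * e \<le> h\<^sup>2 * T"
    proof -
      show "ell > 0" using T h e0 by (simp add: ell_def)
      have "ell = T * (h\<^sup>2 / (32 * e))" by (simp add: ell_def)
      also have "\<dots> \<le> T * (1/2)" using hh T by (intro mult_left_mono) auto
      finally show "ell \<le> T/2" by simp
      show "32 * ell * e \<le> h\<^sup>2 * T" using e0 by (simp add: ell_def)
    qed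
    define k where "k = h\<^sup>2 / (64 * e)"
    have k: "k > 0" and mk: "ell / 2 = T * k" using h e0 by (auto simp: k_def ell_def)
    have Hk: "(7/96) * (T * k) \<le> (96/7) * (e / T) + (432 * M\<^sup>2 / 7) * T * e / (T * k)\<^sup>2"
      using H[OF l] mk by simp
    then have "(7/192) * (T * k) \<le> (96/7) * (e / T) \<or> (7/192) * (T * k) \<le> (432 * M\<^sup>2 / 7) * T * e / (T * k)\<^sup>2"
      by linarith
    then show ?thesis
    proof
      assume A: "(7/192) * (T * k) \<le> (96/7) * (e / T)"
      have "(7/192) * (T * k) * (T * 64 * e) \<le> (96/7) * (e / T) * (T * 64 * e)"
        using A T e0 by (intro mult_right_mono) auto
      moreover have "(7/192) * (T * k) * (T * 64 * e) = (7/192) * (T * h)\<^sup>2"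
      proof -
        have kk: "k * (64 * e) = h\<^sup>2" using e0 by (simp add: k_def)
        have "(7/192) * (T * k) * (T * 64 * e) = (7/192) * (T * T) * (k * (64 * e))" by (simp add: ac_simps)
        then show ?thesis unfolding kk by (simp add: power_mult_distrib power2_eq_square)
      qed
      moreover have "(96/7) * (e / T) * (T * 64 * e) = (96/7) * 64 * e\<^sup>2"
        using T by (simp add: power2_eq_square)
      ultimately have "(7/192) * (T * h)\<^sup>2 \<le> (96/7) * 64 * e\<^sup>2" by simp
      moreover have "(156 * e)\<^sup>2 = 24336 * e\<^sup>2" by (simp add: power_mult_distrib)
      moreover have "e\<^sup>2 \<ge> 0" by simp
      ultimately have "(T * h)\<^sup>2 \<le> (156 * e)\<^sup>2" by linarith
      then have Th: "T * h \<le> 156 * e" by (rule power2_le_imp_le) (use e0 in auto)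
      have "min (sqrt T * h * sqrt h) (T\<^sup>2) \<le> T * h"
      proof (cases "h \<le> T")
        case True
        then have "sqrt h \<le> sqrt T" by simp
        then have "sqrt T * h * sqrt h \<le> sqrt T * h * sqrt T" using T h by (intro mult_left_mono) auto
        also have "\<dots> = T * h" using T by (simp add: mult.commute mult.left_commute)
        finally show ?thesis by simp
      next
        case False
        then have "T\<^sup>2 \<le> T * h" using T by (simp add: power2_eq_square)
        then show ?thesis by simp
      qed
      moreover have "156 * e \<le> 110000 * M\<^sup>2 * e" using M2 e0 by simp
      ultimately show ?thesis using Th P0 by linarith
    next
      assume B: "(7/192) * (T * k) \<le> (432 * M\<^sup>2 / 7) * T * e / (T * k)\<^sup>2"
      have "(7/192) * (T * k) * (T * k)\<^sup>2 \<le> (432 * M\<^sup>2 / 7) * T * e / (T * k)\<^sup>2 * (T * k)\<^sup>2"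
        using B by (intro mult_right_mono) auto
      also have "\<dots> = (432 * M\<^sup>2 / 7) * T * e" using T k by simp
      also have "(7/192) * (T * k) * (T * k)\<^sup>2 = ((7/192) * T\<^sup>2 * k ^ 3) * T"
        by (simp add: power2_eq_square power3_eq_cube)
      finally have "((7/192) * T\<^sup>2 * k ^ 3) * T \<le> ((432 * M\<^sup>2 / 7) * e) * T"
        by (simp add: ac_simps)
      then have b1: "(7/192) * T\<^sup>2 * k ^ 3 \<le> (432 * M\<^sup>2 / 7) * e"
        using T by (simp add: mult_le_cancel_right)
      have k3: "k ^ 3 = h ^ 6 / (262144 * e ^ 3)"
        unfolding k_def by (simp add: power_divide power_mult_distrib flip: power_mult)
      have b2: "(7/192) * T\<^sup>2 * k ^ 3 * (262144 * e ^ 3) = (7/192) * T\<^sup>2 * h ^ 6"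
        using e0 unfolding k3 by simp
      have "(7/192) * T\<^sup>2 * k ^ 3 * (262144 * e ^ 3) \<le> (432 * M\<^sup>2 / 7) * e * (262144 * e ^ 3)"
        using b1 e0 by (intro mult_right_mono) auto
      then have "(7/192) * T\<^sup>2 * h ^ 6 \<le> (432 * M\<^sup>2 / 7) * 262144 * (e * e ^ 3)"
        unfolding b2 by (simp add: ac_simps)
      moreover have "e * e ^ 3 = e ^ 4" by (simp add: power_eq_if)
      ultimately have a: "T\<^sup>2 * h ^ 6 \<le> (192/7) * (432 / 7) * 262144 * M\<^sup>2 * e ^ 4"
        by simp
      have sT: "(sqrt T)\<^sup>2 = T" and sh: "(sqrt h)\<^sup>2 = h" using T h by auto
      have "(sqrt T * h * sqrt h)\<^sup>2 = (sqrt T)\<^sup>2 * h\<^sup>2 * (sqrt h)\<^sup>2"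
        by (simp only: power_mult_distrib)
      also have "\<dots> = T * h ^ 3" unfolding sT sh by (simp add: power2_eq_square power3_eq_cube)
      finally have sq: "(sqrt T * h * sqrt h)\<^sup>2 = T * h ^ 3" .
      have "(sqrt T * h * sqrt h) ^ 4 = ((sqrt T * h * sqrt h)\<^sup>2)\<^sup>2"
        by (simp flip: power_mult)
      also have "\<dots> = T\<^sup>2 * h ^ 6" unfolding sq by (simp add: power_mult_distrib flip: power_mult)
      finally have p4: "(sqrt T * h * sqrt h) ^ 4 = T\<^sup>2 * h ^ 6" .
      have M4: "M\<^sup>2 \<le> M ^ 4" by (rule power_increasing) (use M in auto)
      have e4: "e ^ 4 \<ge> 0" using e0 by simp
      have "(192/7) * (432 / 7) * 262144 * M\<^sup>2 * e ^ 4 \<le> 146 ^ 4 * M ^ 4 * e ^ 4"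
      proof -
        have "(192/7) * (432 / 7) * 262144 * M\<^sup>2 \<le> (146 ^ 4 :: real) * M\<^sup>2"
          using M2 by (intro mult_right_mono) auto
        also have "\<dots> \<le> 146 ^ 4 * M ^ 4" using M4 by simp
        finally show ?thesis using e4 by (intro mult_right_mono) auto
      qed
      also have "\<dots> = (146 * M * e) ^ 4" by (simp add: power_mult_distrib)
      finally have "(sqrt T * h * sqrt h) ^ 4 \<le> (146 * M * e) ^ 4" using a p4 by linarith
      moreover have four: "(4::nat) = Suc 3" by simp
      ultimately have "(sqrt T * h * sqrt h) ^ Suc 3 \<le> (146 * M * e) ^ Suc 3" by metis
      then have "sqrt T * h * sqrt h \<le> 146 * M * e"
        by (rule power_le_imp_le_base) (use M e0 in auto)
      moreover have "146 * M * e \<le> 110000 * M\<^sup>2 * e"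
      proof -
        have "146 * M \<le> 110000 * M\<^sup>2" using M by (simp add: power2_eq_square)
        then show ?thesis using e0 by (intro mult_right_mono) auto
      qed
      ultimately show ?thesis using P0 by linarith
    qed
  qed
qed



lemma open_Wset: "open Wset" unfolding Wset_def by (intro open_Un open_greaterThanLessThan)

lemma tau_prop:
  fixes dw :: "real \<Rightarrow> real"
  assumes c: "continuous_on {0<..1} dw" and ex: "\<exists>t\<in>{0<..1}. dw t \<notin> Wset"
  shows "tau dw \<in> {0<..1} \<and> dw (tau dw) \<notin> Wset"
proof -
  define Z where "Z = {t. t \<in> {0<..1} \<and> dw t \<notin> Wset}"
  obtain t0 where t0: "t0 \<in> Z" using ex by (auto simp: Z_def)
  have bdd: "bdd_above Z" by (rule bdd_aboveI[of _ 1]) (auto simp: Z_def)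
  define s where "s = Sup Z"
  have ne: "Z \<noteq> {}" using t0 by auto
  have s1: "s \<le> 1" unfolding s_def by (rule cSup_least[OF ne]) (auto simp: Z_def)
  have s0: "s \<ge> t0" unfolding s_def by (rule cSup_upper[OF t0 bdd])
  have "t0 > 0" using t0 by (auto simp: Z_def)
  then have sin: "s \<in> {0<..1}" using s0 s1 by auto
  have "dw s \<notin> Wset"
  proof
    assume W: "dw s \<in> Wset"
    obtain r where r: "r > 0" "\<And>y. dist y (dw s) < r \<Longrightarrow> y \<in> Wset"
      using open_Wset W unfolding open_dist by metis
    obtain d where d: "d > 0" "\<And>x. x \<in> {0<..1} \<Longrightarrow> dist x s < d \<Longrightarrow> dist (dw x) (dw s) < r"
      using c sin r(1) unfolding continuous_on_iff by metis
    obtain z where z: "z \<in> Z" "s - d < z" using less_cSupE[of "s - d" Z] ne d(1) unfolding s_def by auto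
    have "z \<le> s" unfolding s_def by (rule cSup_upper[OF z(1) bdd])
    then have "dist z s < d" using z(2) d(1) by (auto simp: dist_real_def)
    moreover have "z \<in> {0<..1}" using z(1) by (auto simp: Z_def)
    ultimately have "dw z \<in> Wset" using d r by blast
    then show False using z(1) by (auto simp: Z_def)
  qed
  then have sZ: "s \<in> Z" using sin by (auto simp: Z_def)
  have "(GREATEST t. t \<in> {0<..1} \<and> dw t \<notin> Wset) = s"
  proof (rule Greatest_equality)
    show "s \<in> {0<..1} \<and> dw s \<notin> Wset" using sZ by (auto simp: Z_def)
    fix y assume "y \<in> {0<..1} \<and> dw y \<notin> Wset"
    then have "y \<in> Z" by (auto simp: Z_def)
    then show "y \<le> s" unfolding s_def by (rule cSup_upper[OF _ bdd])
  qed
  then have "tau dw = s" using ex by (simp add: tau_def)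
  then show ?thesis using sZ by (auto simp: Z_def)
qed

theorem lemma3p3:
  "\<exists>C>0. \<forall>(\<delta>::real) (h::real) u w du dw ddw.
     \<delta> \<in> {0..1} \<longrightarrow> h \<in> {0<..1/2} \<longrightarrow> admissible \<delta> u w \<longrightarrow>
     weak_partial {0<..<1} u 1 du \<longrightarrow>
     weak_partial {0<..<1} w 1 dw \<longrightarrow>
     weak_partial {0<..<1} dw 1 ddw \<longrightarrow>
     continuous_on {0<..1} dw \<longrightarrow>
     ennreal (min (tau dw powr (1/2) * h powr (3/2)) ((tau dw)\<^sup>2))
       \<le> ennreal C * energy h u du dw ddw"
proof -
  obtain M where M: "M \<ge> 1" "\<And>y. Sm' y \<le> M" using Sm'_bound by blast
  define C where "C = 110000 * M\<^sup>2"
  have C0: "C > 0" using M by (simp add: C_def)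
  show ?thesis
  proof (intro exI[of _ C] conjI allI impI C0)
    fix \<delta> h :: real and u w du dw ddw :: "real \<Rightarrow> real"
    assume h: "h \<in> {0<..1/2}" and wpu: "weak_partial {0<..<1} u 1 du"
      and wpd: "weak_partial {0<..<1} dw 1 ddw" and c: "continuous_on {0<..1} dw"
    let ?E = "energy h u du dw ddw"
    let ?L = "min (tau dw powr (1/2) * h powr (3/2)) ((tau dw)\<^sup>2)"
    show "ennreal ?L \<le> ennreal C * ?E"
    proof (cases "\<exists>t\<in>{0<..1}. dw t \<notin> Wset")
      case False
      then have "tau dw = 0" by (simp add: tau_def)
      then show ?thesis by simp
    next
      case True
      then have T: "tau dw \<in> {0<..1}" "dw (tau dw) \<notin> Wset" using tau_prop[OF c] by auto
      show ?thesis
      proof (cases "?E = top")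
        case True
        then show ?thesis using C0 by (simp add: ennreal_mult_top)
      next
        case False
        then obtain e where En: "?E = ennreal e" and e: "e \<ge> 0"
          by (cases "?E") auto
        have h0: "h > 0" using h by simp
        have "?L \<le> 110000 * M\<^sup>2 * e"
        proof (rule final_arith)
          show "0 < tau dw" "tau dw \<le> 1" using T by auto
          fix ell :: real assume l: "ell > 0" "ell \<le> tau dw / 2" "32 * ell * e \<le> h\<^sup>2 * tau dw"
          show "(7/96) * (ell/2) \<le> (96/7) * (e / tau dw) + (432 * M\<^sup>2 / 7) * tau dw * e / (ell/2)\<^sup>2"
            using core_analytic[OF En e wpu wpd c _ _ T(2) h0 M(2,1) l] T by auto
        qed (use h0 e M in auto)
        then have "ennreal ?L \<le> ennreal (C * e)" by (simp add: C_def ennreal_leI)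
        also have "\<dots> = ennreal C * ennreal e" using C0 e by (simp add: ennreal_mult)
        finally show ?thesis using En by simp
      qed
    qed
  qed
qed


end
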